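(* Let $s=[d_1,\dots,d_k]$ be a finite nonempty string of positive integers, let $\epsilon>0$ and $N\ge1$. Let $E_{\epsilon,s,N}$ be the set of $x\in[0,1)$ (having at least $N+k-1$ continued fraction digits) such that \[ |A_s(N;x)-\mu(C_s)N|>\epsilon\,\mu(C_s)N. \] Then \[ \mu(E_{\epsilon,s,N})=O\!\left(\frac{1}{\epsilon^2\mu(C_s)N}\right), \] where the implied constant is uniform in $\epsilon$, $s$ and $N$ but may depend on $k$. Moreover, $E_{\epsilon,s,N}$ is a union of cylinder sets of rank $N+k-1$.
   Context: Continued fraction expansions $\langle a_1,a_2,\dots\rangle$ of numbers in $[0,1)$ have positive integer digits (for rationals, the longer finite expansion is used). $A_s(N;x)$ is the number of indices $1\le i\le N$ such that $[a_i(x),\dots,a_{i+k-1}(x)]=s$; it is only considered meaningful when $x$ has at least $N+k-1$ digits. The Gauss measure is $\mu(A)=\frac{1}{\log2}\int_A\frac{dx}{1+x}$. For a string $t=[t_1,\dots,t_j]$, the cylinder set $C_t=\{x\in[0,1):a_i(x)=t_i,\ 1\le i\le j\}$ is called a cylinder of rank $j$. *)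

theory Defs
  imports "HOL-Analysis.Analysis"
begin

text \<open>Gauss map and the digit it produces (with 1/0 = 0, so gauss 0 = 0).\<close>
definition gauss :: "real \<Rightarrow> real" where
  "gauss x = frac (1 / x)"

text \<open>Number of steps until the Gauss map reaches 0 (None for irrationals):
  this is the length of the shorter (Gauss) expansion of a rational.\<close>
definition gauss_len :: "real \<Rightarrow> nat option" where
  "gauss_len x = (if \<exists>n. (gauss ^^ n) x = 0 then Some (LEAST n. (gauss ^^ n) x = 0) else None)"

definition gauss_digit :: "real \<Rightarrow> nat \<Rightarrow> nat" where
  "gauss_digit x i = nat \<lfloor>1 / (gauss ^^ (i - 1)) x\<rfloor>"

text \<open>i-th continued fraction digit a_i(x), i \<ge> 1, using the LONGER finite expansion
  for rationals: <a_1,...,a_n> (a_n \<ge> 2) is replaced by <a_1,...,a_n - 1, 1>.\<close>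
definition cf_digit :: "real \<Rightarrow> nat \<Rightarrow> nat" where
  "cf_digit x i = (case gauss_len x of
      None \<Rightarrow> gauss_digit x i
    | Some n \<Rightarrow> (if i < n then gauss_digit x i
                 else if i = n then gauss_digit x n - 1
                 else if i = n + 1 then 1 else 0))"

definition cf_has_digits :: "real \<Rightarrow> nat \<Rightarrow> bool" where
  "cf_has_digits x m = (case gauss_len x of
      None \<Rightarrow> True
    | Some n \<Rightarrow> m \<le> (if n = 0 then 0 else n + 1))"

definition A_count :: "nat list \<Rightarrow> nat \<Rightarrow> real \<Rightarrow> nat" where
  "A_count s N x = card {i \<in> {1..N}. \<forall>j < length s. cf_digit x (i + j) = s ! j}"

definition gauss_measure :: "real measure" where
  "gauss_measure = density lborel (\<lambda>x. ennreal (indicator {0..<1} x / (ln 2 * (1 + x))))"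

abbreviation gmu :: "real set \<Rightarrow> real" where
  "gmu A \<equiv> measure gauss_measure A"

definition cylinder :: "nat list \<Rightarrow> real set" where
  "cylinder t = {x \<in> {0..<1}. cf_has_digits x (length t) \<and>
                   (\<forall>i < length t. cf_digit x (i + 1) = t ! i)}"

definition E_set :: "real \<Rightarrow> nat list \<Rightarrow> nat \<Rightarrow> real set" where
  "E_set \<epsilon> s N = {x \<in> {0..<1}. cf_has_digits x (N + length s - 1) \<and>
      \<bar>real (A_count s N x) - gmu (cylinder s) * N\<bar> > \<epsilon> * gmu (cylinder s) * N}"

end

theory Submission
  imports Defs
begin


definition gd :: "real \<Rightarrow> real" where
  "gd x = indicator {0..<1} x / (ln 2 * (1 + x))"

lemma gd_nonneg: "0 \<le> gd x"
  by (auto simp: gd_def indicator_def)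

lemma gd_meas[measurable]: "gd \<in> borel_measurable borel"
  unfolding gd_def by measurable

lemma gauss_measure_alt: "gauss_measure = density lborel (\<lambda>x. ennreal (gd x))"
  unfolding gauss_measure_def gd_def ..

lemma sets_gm[simp, measurable_cong]: "sets gauss_measure = sets borel"
  by (simp add: gauss_measure_def)

lemma space_gm[simp]: "space gauss_measure = UNIV"
  by (simp add: gauss_measure_def)

lemma nn_integral_gm:
  assumes [measurable]: "f \<in> borel_measurable borel"
  shows "(\<integral>\<^sup>+x. f x \<partial>gauss_measure) = (\<integral>\<^sup>+x. ennreal (gd x) * f x \<partial>lborel)"
  unfolding gauss_measure_alt by (subst nn_integral_density) auto

lemma gauss_meas[measurable]: "gauss \<in> borel_measurable borel"
  unfolding gauss_def frac_def by measurable

lemma AE_gm: "AE x in gauss_measure. 0 < x \<and> x < 1"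
proof -
  have "AE x in lborel. x \<noteq> 0" by (rule AE_lborel_singleton)
  then have "AE x in lborel. 0 < ennreal (gd x) \<longrightarrow> 0 < x \<and> x < 1"
    by eventually_elim (auto simp: gd_def indicator_def)
  then show ?thesis unfolding gauss_measure_alt
    by (subst AE_density) auto
qed

lemma emeasure_gm_UNIV: "emeasure gauss_measure UNIV = 1"
proof -
  have "emeasure gauss_measure UNIV = (\<integral>\<^sup>+x. ennreal (gd x) \<partial>lborel)"
    unfolding gauss_measure_alt by (subst emeasure_density) auto
  also have "\<dots> = (\<integral>\<^sup>+x. ennreal (1 / (ln 2 * (1 + x))) * indicator {0..1} x \<partial>lborel)"
  proof (rule nn_integral_cong_AE)
    have "AE x in lborel. x \<noteq> 1" by (rule AE_lborel_singleton)
    then show "AE x in lborel. ennreal (gd x) = ennreal (1 / (ln 2 * (1 + x))) * indicator {0..1} x"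
      by eventually_elim (auto simp: gd_def indicator_def)
  qed
  also have "\<dots> = ennreal (ln (1 + 1) / ln 2 - ln (1 + 0) / ln 2)"
  proof (rule nn_integral_FTC_Icc[where F="\<lambda>x. ln (1 + x) / ln 2"])
    fix x :: real assume x: "x \<in> {0..1}"
    have "((\<lambda>x. ln (1 + x) / ln 2) has_real_derivative (1 / (1 + x)) / ln 2) (at x)"
      using x by (auto intro!: derivative_eq_intros)
    then show "((\<lambda>x. ln (1 + x) / ln 2) has_real_derivative 1 / (ln 2 * (1 + x))) (at x)"
      by (simp add: field_simps)
  qed (auto)
  also have "\<dots> = 1" by simp
  finally show ?thesis by simp
qed

interpretation gm: finite_measure gauss_measure
  by standard (simp add: emeasure_gm_UNIV)

lemma measure_gm_le1: "gmu A \<le> 1"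
  using gm.bounded_measure[of A] emeasure_gm_UNIV by (simp add: measure_def)



definition uu :: "real \<Rightarrow> real \<Rightarrow> real" where "uu a y = 1 / (a + y)"
definition ww :: "real \<Rightarrow> real \<Rightarrow> real" where "ww a y = (1 + y) / ((a + y) * (a + y + 1))"
definition Iv :: "real \<Rightarrow> real set" where "Iv a = {1 / (a + 1)<..1 / a}"

lemma uu_meas[measurable]: "uu a \<in> borel_measurable borel"
  unfolding uu_def by measurable
lemma ww_meas[measurable]: "ww a \<in> borel_measurable borel"
  unfolding ww_def by measurable

lemma subst_Iv:
  fixes a :: real and H :: "real \<Rightarrow> ennreal"
  assumes a: "1 \<le> a" and [measurable]: "H \<in> borel_measurable borel"
  shows "(\<integral>\<^sup>+x. indicator (Iv a) x * H x \<partial>gauss_measure)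
       = (\<integral>\<^sup>+y. ennreal (ww a y) * H (uu a y) \<partial>gauss_measure)"
proof -
  define f where "f x = ennreal (gd x) * indicator (Iv a) x * H x" for x
  have fm[measurable]: "f \<in> borel_measurable borel" unfolding f_def Iv_def by measurable
  define \<phi> where "\<phi> t = 1 / (a - t)" for t :: real
  have "(\<integral>\<^sup>+x. indicator (Iv a) x * H x \<partial>gauss_measure) = (\<integral>\<^sup>+x. f x \<partial>lborel)"
    by (subst nn_integral_gm) (auto simp: f_def[abs_def] Iv_def mult.assoc)
  also have "\<dots> = (\<integral>\<^sup>+x. f x * indicator {\<phi> (-1)..\<phi> 0} x \<partial>lborel)"
    by (rule nn_integral_cong) (auto simp: f_def Iv_def \<phi>_def indicator_def)
  also have "\<dots> = (\<integral>\<^sup>+t. f (\<phi> t) * ennreal (1 / (a - t)^2) * indicator {-1..0} t \<partial>lborel)"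
  proof (rule nn_integral_substitution_aux)
    fix t :: real assume t: "t \<in> {-1..0}"
    then have "a - t \<noteq> 0" using a by auto
    then show "(\<phi> has_real_derivative 1 / (a - t)^2) (at t)"
      unfolding \<phi>_def by (auto intro!: derivative_eq_intros simp: power2_eq_square field_simps)
  next
    have "\<forall>t\<in>{-1..0}. a - t \<noteq> 0" using a by auto
    then show "continuous_on {-1..0} (\<lambda>t. 1 / (a - t)^2)"
      by (auto intro!: continuous_intros)
  qed auto
  also have "\<dots> = (\<integral>\<^sup>+y. f (\<phi> (- y)) * ennreal (1 / (a + y)^2) * indicator {-1..0} (- y) \<partial>lborel)"
    by (subst nn_integral_real_affine[where c="-1" and t=0]) (auto simp: \<phi>_def)
  also have "\<dots> = (\<integral>\<^sup>+y. ennreal (gd y) * (ennreal (ww a y) * H (uu a y)) \<partial>lborel)"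
  proof (rule nn_integral_cong_AE)
    have "AE y in lborel. y \<noteq> 0" by (rule AE_lborel_singleton)
    then show "AE y in lborel. f (\<phi> (- y)) * ennreal (1 / (a + y)^2) * indicator {-1..0} (- y)
         = ennreal (gd y) * (ennreal (ww a y) * H (uu a y))"
    proof eventually_elim
      fix y :: real assume y0: "y \<noteq> 0"
      have phi: "\<phi> (- y) = uu a y" by (simp add: \<phi>_def uu_def)
      show "f (\<phi> (- y)) * ennreal (1 / (a + y)^2) * indicator {-1..0} (- y)
         = ennreal (gd y) * (ennreal (ww a y) * H (uu a y))"
      proof (cases "0 < y \<and> y < 1")
        case True
        then have ay: "a + y > 1" using a by auto
        have inI: "uu a y \<in> Iv a" using True a
          by (auto simp: uu_def Iv_def field_simps)
        have u01: "0 \<le> uu a y" "uu a y < 1" using ay by (auto simp: uu_def)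
        have req: "gd (uu a y) * (1 / (a + y)^2) = gd y * ww a y"
        proof -
          have l2: "ln (2::real) > 0" by simp
          have e1: "gd (uu a y) = (a + y) / (ln 2 * (a + y + 1))"
            using u01 ay by (simp add: gd_def uu_def indicator_def field_simps)
          have e2: "gd y = 1 / (ln 2 * (1 + y))" using True by (simp add: gd_def indicator_def)
          have "gd (uu a y) * (1 / (a + y)^2) = 1 / (ln 2 * ((a + y) * (a + y + 1)))"
          proof -
            have nz: "a + y \<noteq> 0" "a + y + 1 \<noteq> 0" "ln (2::real) \<noteq> 0" using ay by auto
            have gen: "\<And>z L::real. z \<noteq> 0 \<Longrightarrow> z + 1 \<noteq> 0 \<Longrightarrow> L \<noteq> 0 \<Longrightarrow>
                z / (L * (z + 1)) * (1 / z^2) = 1 / (L * (z * (z + 1)))"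
              by (simp add: power2_eq_square)
            show ?thesis unfolding e1 using gen[OF nz] by simp
          qed
          also have "\<dots> = gd y * ww a y"
          proof -
            have nz: "a + y \<noteq> 0" "a + y + 1 \<noteq> 0" "ln (2::real) \<noteq> 0" "1 + y \<noteq> 0" using ay True by auto
            have gen: "\<And>z L t::real. t \<noteq> 0 \<Longrightarrow> L \<noteq> 0 \<Longrightarrow>
                1 / (L * z) = 1 / (L * t) * (t / z)"
              by simp
            show ?thesis unfolding e2 ww_def using gen[OF nz(4) nz(3)] by simp
          qed
          finally show ?thesis .
        qed
        have "f (\<phi> (- y)) * ennreal (1 / (a + y)^2) * indicator {-1..0} (- y)
            = ennreal (gd (uu a y) * (1 / (a + y)^2)) * H (uu a y)"
        proof -
          have "ennreal (gd (uu a y)) * ennreal (1 / (a + y)^2) = ennreal (gd (uu a y) * (1 / (a + y)^2))"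
            by (rule ennreal_mult'[symmetric]) (simp add: gd_nonneg)
          then show ?thesis using True inI by (simp add: phi f_def mult_ac)
        qed
        also have "\<dots> = ennreal (gd y * ww a y) * H (uu a y)" using req by simp
        also have "\<dots> = ennreal (gd y) * (ennreal (ww a y) * H (uu a y))"
        proof -
          have "ww a y \<ge> 0" using True a unfolding ww_def by (auto intro!: divide_nonneg_pos)
          then have "ennreal (gd y * ww a y) = ennreal (gd y) * ennreal (ww a y)"
            by (simp add: ennreal_mult gd_nonneg)
          then show ?thesis by (simp add: mult_ac)
        qed
        finally show ?thesis .
      next
        case False
        then have "y < 0 \<or> y \<ge> 1" using y0 by auto
        then show ?thesis
        proof
          assume "y < 0" then show ?thesis by (simp add: gd_def)
        next
          assume y1: "y \<ge> 1"
          show ?thesis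
          proof (cases "y = 1")
            case True
            then have "uu a y \<notin> Iv a" by (simp add: uu_def Iv_def)
            then have "indicator (Iv a) (\<phi> (- y)) = (0::ennreal)" using phi by simp
            then show ?thesis using True by (simp add: f_def gd_def)
          next
            case False then show ?thesis using y1 by (simp add: gd_def indicator_def)
          qed
        qed
      qed
    qed
  qed
  also have "\<dots> = (\<integral>\<^sup>+y. ennreal (ww a y) * H (uu a y) \<partial>gauss_measure)"
    by (subst nn_integral_gm) auto
  finally show ?thesis .
qed



lemma Iv_iff: "0 < x \<Longrightarrow> (x \<in> Iv (real n + 1)) = (\<lfloor>1 / x\<rfloor> = int n + 1)"
proof -
  assume x: "0 < x"
  have "(x \<in> Iv (real n + 1)) = (1 / (real n + 2) < x \<and> x \<le> 1 / (real n + 1))"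
    by (simp add: Iv_def add.assoc)
  also have "\<dots> = (real n + 1 \<le> 1 / x \<and> 1 / x < real n + 2)"
    using x by (auto simp: field_simps)
  also have "\<dots> = (\<lfloor>1 / x\<rfloor> = int n + 1)"
    by (simp add: floor_eq_iff add.assoc)
  finally show ?thesis .
qed

lemma sum_ind_Iv:
  assumes "0 < x" "x < 1"
  shows "(\<Sum>n. indicator (Iv (real n + 1)) x :: ennreal) = 1"
proof -
  define n0 where "n0 = nat \<lfloor>1 / x\<rfloor> - 1"
  have f1: "\<lfloor>1 / x\<rfloor> \<ge> 1" using assms by (simp add: le_floor_iff field_simps)
  have "(\<lambda>n. indicator (Iv (real n + 1)) x :: ennreal) = (\<lambda>n. if n = n0 then 1 else 0)"
  proof
    fix n
    show "(indicator (Iv (real n + 1)) x :: ennreal) = (if n = n0 then 1 else 0)"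
    proof -
      have "int n0 + 1 = \<lfloor>1 / x\<rfloor>" using f1 unfolding n0_def by linarith
      then have "(x \<in> Iv (real n + 1)) = (n = n0)" using Iv_iff[OF assms(1), of n] by linarith
      then show ?thesis by (simp add: indicator_def)
    qed
  qed
  moreover have "(\<lambda>n. if n = n0 then 1 else 0 :: ennreal) sums 1"
    using sums_single[of n0 "\<lambda>_. 1 :: ennreal"] by simp
  ultimately show ?thesis by (simp add: sums_iff)
qed

lemma split_Iv:
  assumes [measurable]: "K \<in> borel_measurable borel"
  shows "(\<integral>\<^sup>+x. K x \<partial>gauss_measure) = (\<Sum>n. \<integral>\<^sup>+x. indicator (Iv (real n + 1)) x * K x \<partial>gauss_measure)"
proof -
  have [measurable]: "\<And>n. Iv (real n + 1) \<in> sets borel" by (simp add: Iv_def)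
  have "(\<Sum>n. \<integral>\<^sup>+x. indicator (Iv (real n + 1)) x * K x \<partial>gauss_measure)
      = (\<integral>\<^sup>+x. (\<Sum>n. indicator (Iv (real n + 1)) x * K x) \<partial>gauss_measure)"
    by (rule nn_integral_suminf[symmetric]) auto
  also have "\<dots> = (\<integral>\<^sup>+x. K x \<partial>gauss_measure)"
  proof (rule nn_integral_cong_AE)
    show "AE x in gauss_measure. (\<Sum>n. indicator (Iv (real n + 1)) x * K x) = K x"
      using AE_gm
    proof eventually_elim
      fix x :: real assume x: "0 < x \<and> x < 1"
      have "(\<Sum>n. indicator (Iv (real n + 1)) x * K x) = (\<Sum>n. indicator (Iv (real n + 1)) x) * K x"
        by simp
      then show "(\<Sum>n. indicator (Iv (real n + 1)) x * K x) = K x"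
        using sum_ind_Iv[of x] x by simp
    qed
  qed
  finally show ?thesis ..
qed

lemma gauss_uu: "0 \<le> y \<Longrightarrow> y < 1 \<Longrightarrow> gauss (uu (real n + 1) y) = y"
proof -
  assume y: "0 \<le> y" "y < 1"
  have "\<lfloor>real n + 1 + y\<rfloor> = int n + 1" using y by (simp add: floor_eq_iff)
  then show ?thesis using y by (simp add: gauss_def uu_def frac_def)
qed

definition Pe :: "(real \<Rightarrow> ennreal) \<Rightarrow> real \<Rightarrow> ennreal" where
  "Pe K y = (\<Sum>n. ennreal (ww (real n + 1) y) * K (uu (real n + 1) y))"

lemma transfer:
  assumes [measurable]: "K \<in> borel_measurable borel" "B \<in> sets borel"
  shows "(\<integral>\<^sup>+x. K x * indicator B (gauss x) \<partial>gauss_measure)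
       = (\<integral>\<^sup>+y. indicator B y * Pe K y \<partial>gauss_measure)"
proof -
  have "(\<integral>\<^sup>+x. K x * indicator B (gauss x) \<partial>gauss_measure)
      = (\<Sum>n. \<integral>\<^sup>+x. indicator (Iv (real n + 1)) x * (K x * indicator B (gauss x)) \<partial>gauss_measure)"
    by (rule split_Iv) measurable
  also have "\<dots> = (\<Sum>n. \<integral>\<^sup>+y. ennreal (ww (real n + 1) y) * (K (uu (real n + 1) y) * indicator B (gauss (uu (real n + 1) y))) \<partial>gauss_measure)"
    by (intro suminf_cong subst_Iv) auto
  also have "\<dots> = (\<Sum>n. \<integral>\<^sup>+y. indicator B y * (ennreal (ww (real n + 1) y) * K (uu (real n + 1) y)) \<partial>gauss_measure)"
  proof (intro suminf_cong nn_integral_cong_AE)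
    fix n
    show "AE y in gauss_measure. ennreal (ww (real n + 1) y) * (K (uu (real n + 1) y) * indicator B (gauss (uu (real n + 1) y)))
        = indicator B y * (ennreal (ww (real n + 1) y) * K (uu (real n + 1) y))"
      using AE_gm by eventually_elim (simp add: gauss_uu mult_ac)
  qed
  also have "\<dots> = (\<integral>\<^sup>+y. (\<Sum>n. indicator B y * (ennreal (ww (real n + 1) y) * K (uu (real n + 1) y))) \<partial>gauss_measure)"
    by (rule nn_integral_suminf[symmetric]) measurable
  also have "\<dots> = (\<integral>\<^sup>+y. indicator B y * Pe K y \<partial>gauss_measure)"
    by (simp add: Pe_def)
  finally show ?thesis .
qed



lemma ww_nonneg: "0 \<le> y \<Longrightarrow> 0 < a \<Longrightarrow> 0 \<le> ww a y"
  unfolding ww_def by (auto intro!: divide_nonneg_pos)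

lemma ww_sums: assumes y: "0 \<le> y" shows "(\<lambda>n. ww (real n + 1) y) sums 1"
proof -
  define f where "f n = 1 / (real n + 1 + y)" for n
  have "LIM n sequentially. (1 + y) + real n :> at_top"
    by (rule filterlim_tendsto_add_at_top[OF tendsto_const filterlim_real_sequentially])
  then have "(\<lambda>n. inverse ((1 + y) + real n)) \<longlonglongrightarrow> 0" by (rule tendsto_inverse_0_at_top)
  moreover have "f = (\<lambda>n. inverse ((1 + y) + real n))" by (auto simp: f_def inverse_eq_divide add_ac)
  ultimately have "f \<longlonglongrightarrow> 0" by simp
  then have "(\<lambda>n. f n - f (Suc n)) sums (f 0 - 0)" by (rule telescope_sums')
  then have "(\<lambda>n. (1 + y) * (f n - f (Suc n))) sums ((1 + y) * (f 0 - 0))" by (rule sums_mult)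
  moreover have "(1 + y) * (f 0 - 0) = 1" using y by (simp add: f_def)
  moreover have "(1 + y) * (f n - f (Suc n)) = ww (real n + 1) y" for n
  proof -
    have nz: "real n + 1 + y \<noteq> 0" "real n + 1 + y + 1 \<noteq> 0" using y by linarith+
    have "f n - f (Suc n) = 1 / ((real n + 1 + y) * (real n + 1 + y + 1))"
      using nz by (simp add: f_def field_simps)
    then show ?thesis by (simp add: ww_def)
  qed
  ultimately show ?thesis by simp
qed

lemma Pe_one: "0 \<le> y \<Longrightarrow> Pe (\<lambda>_. 1) y = 1"
  unfolding Pe_def using suminf_ennreal_eq[OF ww_nonneg ww_sums] by simp

lemma vimage_gauss_meas[measurable]: "B \<in> sets borel \<Longrightarrow> gauss -` B \<in> sets borel"
  using measurable_sets_borel[OF gauss_meas, of B] by simp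

lemma vimage_gauss_n_meas[measurable]: "B \<in> sets borel \<Longrightarrow> (gauss ^^ n) -` B \<in> sets borel"
  using measurable_sets_borel[OF measurable_compose_n[OF gauss_meas], of B n] by simp

lemma invariance:
  assumes [measurable]: "B \<in> sets borel"
  shows "emeasure gauss_measure (gauss -` B) = emeasure gauss_measure B"
proof -
  have "emeasure gauss_measure (gauss -` B) = (\<integral>\<^sup>+x. 1 * indicator B (gauss x) \<partial>gauss_measure)"
  proof -
    have "(\<lambda>x. 1 * indicator B (gauss x)) = (indicator (gauss -` B) :: real \<Rightarrow> ennreal)"
      by (auto simp: indicator_def)
    then show ?thesis by simp
  qed
  also have "\<dots> = (\<integral>\<^sup>+y. indicator B y * Pe (\<lambda>_. 1) y \<partial>gauss_measure)"
    by (rule transfer) auto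
  also have "\<dots> = (\<integral>\<^sup>+y. indicator B y \<partial>gauss_measure)"
    by (rule nn_integral_cong_AE) (use AE_gm in \<open>eventually_elim, simp add: Pe_one\<close>)
  finally show ?thesis by simp
qed

lemma invariance_n:
  assumes [measurable]: "B \<in> sets borel"
  shows "emeasure gauss_measure ((gauss ^^ n) -` B) = emeasure gauss_measure B"
proof (induction n)
  case (Suc n)
  have m: "(gauss ^^ n) -` B \<in> sets borel" by measurable
  have e: "(gauss ^^ Suc n) -` B = gauss -` ((gauss ^^ n) -` B)"
    by (auto simp: funpow_Suc_right simp del: funpow.simps)
  show ?case unfolding e using invariance[OF m] Suc by simp
qed simp

lemma AE_funpow: "AE x in gauss_measure. 0 < (gauss ^^ n) x \<and> (gauss ^^ n) x < 1"
proof -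
  have m: "- {0<..<1::real} \<in> sets borel" by auto
  have "emeasure gauss_measure (- {0<..<1::real}) = 0"
  proof -
    have e: "{x \<in> space gauss_measure. \<not> x \<in> {0<..<1}} = - {0<..<1::real}" by auto
    have "AE x in gauss_measure. x \<in> {0<..<1}" using AE_gm by simp
    then show ?thesis using AE_iff_measurable[OF _ e] by simp
  qed
  then have z: "emeasure gauss_measure ((gauss ^^ n) -` (- {0<..<1})) = 0"
    using invariance_n[OF m, of n] by simp
  then show ?thesis
  proof -
    have e: "{x \<in> space gauss_measure. \<not> (gauss ^^ n) x \<in> {0<..<1}} = (gauss ^^ n) -` (- {0<..<1::real})" by auto
    have "AE x in gauss_measure. (gauss ^^ n) x \<in> {0<..<1}"
      using AE_iff_measurable[OF _ e] vimage_gauss_n_meas[OF m] z by simp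
    then show ?thesis by simp
  qed
qed

definition dg :: "real \<Rightarrow> nat" where "dg y = nat \<lfloor>1 / y\<rfloor>"

lemma dg_meas[measurable]: "dg \<in> measurable borel (count_space UNIV)"
  unfolding dg_def by measurable

definition D :: "nat list \<Rightarrow> real set" where
  "D s = {x. \<forall>j<length s. dg ((gauss ^^ j) x) = s ! j}"

lemma D_meas[measurable]: "D s \<in> sets borel"
  unfolding D_def by measurable

lemma D_snoc: "D (s @ [a]) = {x. x \<in> D s \<and> dg ((gauss ^^ length s) x) = a}"
  by (auto simp: D_def nth_append less_Suc_eq)

definition step4 :: "real \<times> real \<times> real \<times> real \<Rightarrow> nat \<Rightarrow> real \<times> real \<times> real \<times> real" where
  "step4 p a = (case p of (\<alpha>, \<beta>, \<gamma>, \<delta>) \<Rightarrow> (real a * \<alpha> + \<beta>, \<alpha>, real a * \<gamma> + \<delta>, \<gamma>))"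

definition Fp :: "nat list \<Rightarrow> real \<times> real \<times> real \<times> real" where
  "Fp s = foldl step4 (1, 0, 1, 1) s"

definition Fq :: "real \<times> real \<times> real \<times> real \<Rightarrow> real \<Rightarrow> real" where
  "Fq p y = (case p of (\<alpha>, \<beta>, \<gamma>, \<delta>) \<Rightarrow> (1 + y) / ((\<alpha> + \<beta> * y) * (\<gamma> + \<delta> * y)))"

definition FF :: "nat list \<Rightarrow> real \<Rightarrow> real" where
  "FF s = Fq (Fp s)"

definition goodp :: "real \<times> real \<times> real \<times> real \<Rightarrow> bool" where
  "goodp p = (case p of (\<alpha>, \<beta>, \<gamma>, \<delta>) \<Rightarrow> 1 \<le> \<alpha> \<and> 0 \<le> \<beta> \<and> \<beta> \<le> \<alpha> \<and> 1 \<le> \<gamma> \<and> 0 \<le> \<delta> \<and> \<delta> \<le> \<gamma>)"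

lemma Fp_snoc: "Fp (s @ [a]) = step4 (Fp s) a"
  by (simp add: Fp_def)

lemma goodp_step: "goodp p \<Longrightarrow> 1 \<le> a \<Longrightarrow> goodp (step4 p a)"
proof -
  assume "goodp p" "1 \<le> a"
  moreover obtain \<alpha> \<beta> \<gamma> \<delta> where p: "p = (\<alpha>, \<beta>, \<gamma>, \<delta>)" by (cases p) auto
  ultimately have h: "1 \<le> \<alpha>" "0 \<le> \<beta>" "\<beta> \<le> \<alpha>" "1 \<le> \<gamma>" "0 \<le> \<delta>" "\<delta> \<le> \<gamma>" "1 \<le> real a"
    by (auto simp: goodp_def)
  have "\<alpha> \<le> real a * \<alpha>" "\<gamma> \<le> real a * \<gamma>" using h by (simp_all add: mult_le_cancel_right1)
  then show ?thesis using h unfolding goodp_def step4_def p by (simp; intro conjI; linarith)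
qed

lemma goodp_Fp: "\<forall>d\<in>set s. 0 < d \<Longrightarrow> goodp (Fp s)"
proof (induction s rule: rev_induct)
  case Nil then show ?case by (simp add: Fp_def goodp_def)
next
  case (snoc a s) then show ?case by (simp add: Fp_snoc goodp_step)
qed

lemma Fq_meas[measurable]: "Fq p \<in> borel_measurable borel"
  by (cases p) (simp add: Fq_def[abs_def])

lemma FF_meas[measurable]: "FF s \<in> borel_measurable borel"
  unfolding FF_def by simp

lemma Fq_nonneg: "goodp p \<Longrightarrow> 0 \<le> y \<Longrightarrow> 0 \<le> Fq p y"
  by (cases p) (auto simp: Fq_def goodp_def intro!: divide_nonneg_pos mult_pos_pos add_pos_nonneg)

lemma Fq_step:
  assumes p: "goodp p" and a: "1 \<le> a" and y: "0 \<le> y"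
  shows "ww (real a) y * Fq p (uu (real a) y) = Fq (step4 p a) y"
proof -
  obtain \<alpha> \<beta> \<gamma> \<delta> where pp: "p = (\<alpha>, \<beta>, \<gamma>, \<delta>)" by (cases p) auto
  have h: "1 \<le> \<alpha>" "0 \<le> \<beta>" "1 \<le> \<gamma>" "0 \<le> \<delta>" using p by (auto simp: goodp_def pp)
  define z where "z = real a + y"
  have z: "z \<ge> 1" using a y by (simp add: z_def)
  have n1: "\<alpha> * z + \<beta> > 0" "\<gamma> * z + \<delta> > 0" using h z
    by (auto intro!: add_pos_nonneg mult_pos_pos)
  have n2: "\<alpha> + \<beta> / z > 0" "\<gamma> + \<delta> / z > 0" using h z
    by (auto intro!: add_pos_nonneg divide_nonneg_pos)
  have e1: "\<alpha> + \<beta> / z = (\<alpha> * z + \<beta>) / z" "\<gamma> + \<delta> / z = (\<gamma> * z + \<delta>) / z" "1 + 1 / z = (z + 1) / z"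
    using z by (auto simp: field_simps)
  have lhs: "ww (real a) y * Fq p (uu (real a) y)
      = (1 + y) / (z * (z + 1)) * ((1 + 1 / z) / ((\<alpha> + \<beta> / z) * (\<gamma> + \<delta> / z)))"
    by (simp add: ww_def Fq_def uu_def pp z_def)
  also have "\<dots> = (1 + y) / ((\<alpha> * z + \<beta>) * (\<gamma> * z + \<delta>))"
  proof -
    have gen: "\<And>c A G z :: real. z > 0 \<Longrightarrow> A > 0 \<Longrightarrow> G > 0 \<Longrightarrow>
       c / (z * (z + 1)) * (((z + 1) / z) / ((A / z) * (G / z))) = c / (A * G)"
      by (simp add: divide_simps)
    show ?thesis unfolding e1 using gen z n1 by simp
  qed
  also have "\<dots> = Fq (step4 p a) y"
    by (simp add: Fq_def step4_def pp z_def algebra_simps)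
  finally show ?thesis .
qed

lemma dg_Iv: "0 < y \<Longrightarrow> 1 \<le> a \<Longrightarrow> (dg y = a) = (y \<in> Iv (real (a - 1) + 1))"
proof -
  assume y: "0 < y" and a: "1 \<le> a"
  have "0 \<le> \<lfloor>1 / y\<rfloor>" using y by simp
  then have "(dg y = a) = (\<lfloor>1 / y\<rfloor> = int (a - 1) + 1)" using a by (auto simp: dg_def)
  then show ?thesis using Iv_iff[OF y, of "a - 1"] by simp
qed

lemma cyl_formula:
  assumes pos: "\<forall>d\<in>set s. 0 < d" and [measurable]: "h \<in> borel_measurable borel"
  shows "(\<integral>\<^sup>+x. indicator (D s) x * h ((gauss ^^ length s) x) \<partial>gauss_measure)
       = (\<integral>\<^sup>+y. ennreal (FF s y) * h y \<partial>gauss_measure)"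
  using pos assms(2)
proof (induction s arbitrary: h rule: rev_induct)
  case Nil
  show ?case
  proof (rule nn_integral_cong_AE)
    show "AE x in gauss_measure. indicator (D []) x * h ((gauss ^^ length []) x) = ennreal (FF [] x) * h x"
      using AE_gm by eventually_elim (simp add: D_def FF_def Fp_def Fq_def)
  qed
next
  case (snoc a s)
  note [measurable] = snoc.prems(2)
  have pos: "\<forall>d\<in>set s. 0 < d" and a: "1 \<le> a" using snoc.prems by auto
  have gp: "goodp (Fp s)" using goodp_Fp[OF pos] .
  define h' where "h' y = indicator (Iv (real (a - 1) + 1)) y * h (gauss y)" for y
  have [measurable]: "h' \<in> borel_measurable borel" unfolding h'_def Iv_def by measurable
  have "(\<integral>\<^sup>+x. indicator (D (s @ [a])) x * h ((gauss ^^ length (s @ [a])) x) \<partial>gauss_measure)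
      = (\<integral>\<^sup>+x. indicator (D s) x * h' ((gauss ^^ length s) x) \<partial>gauss_measure)"
  proof (rule nn_integral_cong_AE)
    have "AE x in gauss_measure. 0 < (gauss ^^ length s) x"
      using AE_funpow[of "length s"] by eventually_elim simp
    then show "AE x in gauss_measure. indicator (D (s @ [a])) x * h ((gauss ^^ length (s @ [a])) x)
        = indicator (D s) x * h' ((gauss ^^ length s) x)"
    proof eventually_elim
      fix x assume x0: "0 < (gauss ^^ length s) x"
      show "indicator (D (s @ [a])) x * h ((gauss ^^ length (s @ [a])) x)
        = indicator (D s) x * h' ((gauss ^^ length s) x)"
        using dg_Iv[OF x0 a] by (simp add: D_snoc h'_def indicator_def funpow_swap1)
    qed
  qed
  also have "\<dots> = (\<integral>\<^sup>+y. ennreal (FF s y) * h' y \<partial>gauss_measure)"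
    by (rule snoc.IH[OF pos]) simp
  also have "\<dots> = (\<integral>\<^sup>+y. indicator (Iv (real (a - 1) + 1)) y * (ennreal (FF s y) * h (gauss y)) \<partial>gauss_measure)"
    by (simp add: h'_def mult_ac)
  also have "\<dots> = (\<integral>\<^sup>+y. ennreal (ww (real (a - 1) + 1) y) * (ennreal (FF s (uu (real (a - 1) + 1) y)) * h (gauss (uu (real (a - 1) + 1) y))) \<partial>gauss_measure)"
    by (rule subst_Iv) auto
  also have "\<dots> = (\<integral>\<^sup>+y. ennreal (FF (s @ [a]) y) * h y \<partial>gauss_measure)"
  proof (rule nn_integral_cong_AE)
    show "AE y in gauss_measure. ennreal (ww (real (a - 1) + 1) y) * (ennreal (FF s (uu (real (a - 1) + 1) y)) * h (gauss (uu (real (a - 1) + 1) y)))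
        = ennreal (FF (s @ [a]) y) * h y"
      using AE_gm
    proof eventually_elim
      fix y :: real assume y: "0 < y \<and> y < 1"
      have ra: "real (a - 1) + 1 = real a" using a by simp
      have u0: "0 \<le> uu (real a) y" using y a by (simp add: uu_def)
      have "ennreal (ww (real a) y) * ennreal (FF s (uu (real a) y)) = ennreal (ww (real a) y * FF s (uu (real a) y))"
        using ww_nonneg[of y "real a"] Fq_nonneg[OF gp u0] y a by (simp add: ennreal_mult FF_def)
      also have "ww (real a) y * FF s (uu (real a) y) = FF (s @ [a]) y"
        using Fq_step[OF gp a] y by (simp add: FF_def Fp_snoc)
      finally show "ennreal (ww (real (a - 1) + 1) y) * (ennreal (FF s (uu (real (a - 1) + 1) y)) * h (gauss (uu (real (a - 1) + 1) y)))
        = ennreal (FF (s @ [a]) y) * h y"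
        using gauss_uu[of y "a - 1"] y unfolding ra by (simp add: mult.assoc[symmetric])
    qed
  qed
  finally show ?case .
qed



lemma lip_deriv:
  fixes f f' :: "real \<Rightarrow> real"
  assumes der: "\<And>t. t \<in> {0..1} \<Longrightarrow> DERIV f t :> f' t"
    and bd: "\<And>t. t \<in> {0..1} \<Longrightarrow> \<bar>f' t\<bar> \<le> M"
    and x: "x \<in> {0..1}" and y: "y \<in> {0..1}"
  shows "\<bar>f x - f y\<bar> \<le> M * \<bar>x - y\<bar>"
proof -
  have main: "\<bar>f q - f p\<bar> \<le> M * \<bar>q - p\<bar>" if "p < q" "p \<in> {0..1}" "q \<in> {0..1}" for p q
  proof -
    have dd: "\<And>x. p \<le> x \<Longrightarrow> x \<le> q \<Longrightarrow> DERIV f x :> f' x"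
      using der that by auto
    obtain z where z: "p < z" "z < q" "f q - f p = (q - p) * f' z"
      using MVT2[OF \<open>p < q\<close> dd] by auto
    have "z \<in> {0..1}" using z that by auto
    then have "\<bar>f' z\<bar> \<le> M" by (rule bd)
    then have "\<bar>q - p\<bar> * \<bar>f' z\<bar> \<le> \<bar>q - p\<bar> * M" by (rule mult_left_mono) simp
    then show ?thesis using z by (simp add: abs_mult mult.commute)
  qed
  show ?thesis
  proof (cases x y rule: linorder_cases)
    case less then show ?thesis using main[OF less x y] by (simp add: abs_minus_commute)
  next
    case greater then show ?thesis using main[OF greater y x] by simp
  qed simp
qed

lemma P1:
  fixes a x y :: real
  assumes a: "1 \<le> a" and x: "x \<in> {0..1}" and y: "y \<in> {0..1}"
  shows "ww a x * \<bar>uu a x - uu a y\<bar> \<le> 2 / (a^2 * (a + 1)^2) * \<bar>x - y\<bar>"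
proof -
  have x0: "0 \<le> x" "x \<le> 1" and y0: "0 \<le> y" "y \<le> 1" using x y by auto
  have pos: "a + x > 0" "a + y > 0" "a + x + 1 > 0" using a x0 y0 by linarith+
  have d: "uu a x - uu a y = (y - x) / ((a + x) * (a + y))"
    using pos by (simp add: uu_def field_simps)
  have e: "ww a x * \<bar>uu a x - uu a y\<bar>
     = ((1 + x) / (a + x)) * (1 / (a + x + 1)) * (1 / (a + x)) * (1 / (a + y)) * \<bar>x - y\<bar>"
    using pos by (simp add: d ww_def abs_minus_commute)
  have b1: "(1 + x) / (a + x) \<le> 2 / (a + 1)"
  proof -
    have "(1 + x) * (a + 1) \<le> 2 * (a + x)"
    proof -
      have "(a - 1) * (x - 1) \<le> 0" using a x0 by (intro mult_nonneg_nonpos) auto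
      then show ?thesis by (simp add: algebra_simps)
    qed
    then show ?thesis using pos a by (simp add: divide_simps)
  qed
  have b2: "1 / (a + x + 1) \<le> 1 / (a + 1)" using a x0 by (intro divide_left_mono) auto
  have b3: "1 / (a + x) \<le> 1 / a" using a x0 by (intro divide_left_mono) auto
  have b4: "1 / (a + y) \<le> 1 / a" using a y0 by (intro divide_left_mono) auto
  have "((1 + x) / (a + x)) * (1 / (a + x + 1)) * (1 / (a + x)) * (1 / (a + y))
      \<le> (2 / (a + 1)) * (1 / (a + 1)) * (1 / a) * (1 / a)"
    using pos a x0 y0
    by (intro mult_mono b1 b2 b3 b4) (auto intro!: mult_nonneg_nonneg divide_nonneg_nonneg)
  also have "\<dots> = 2 / (a^2 * (a + 1)^2)" by (simp add: power2_eq_square field_simps)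
  finally show ?thesis unfolding e by (rule mult_right_mono) simp
qed

lemma ww_deriv:
  fixes a t :: real
  assumes "1 \<le> a" "0 \<le> t"
  shows "DERIV (ww a) t :> (a^2 - a - 1 - t^2 - 2 * t) / ((a + t)^2 * (a + t + 1)^2)"
proof -
  have nz: "(a + t) * (a + t + 1) \<noteq> 0" using assms by (smt (verit) mult_pos_pos)
  have d1: "DERIV (\<lambda>t. 1 + t) t :> 1" by (auto intro!: derivative_eq_intros)
  have d2: "DERIV (\<lambda>t. (a + t) * (a + t + 1)) t :> ((a + t + 1) + (a + t))"
    by (auto intro!: derivative_eq_intros)
  have e1: "1 * ((a + t) * (a + t + 1)) - (1 + t) * ((a + t + 1) + (a + t)) = a^2 - a - 1 - t^2 - 2 * t"
    by (simp add: power2_eq_square algebra_simps)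
  have e2: "((a + t) * (a + t + 1)) * ((a + t) * (a + t + 1)) = (a + t)^2 * (a + t + 1)^2"
    by (simp add: power2_eq_square mult_ac)
  show ?thesis using DERIV_divide[OF d1 d2 nz] unfolding e1 e2 by (simp add: ww_def[abs_def])
qed

lemma ww_deriv_bound:
  fixes a t :: real
  assumes a: "1 \<le> a" and t: "t \<in> {0..1}"
  shows "\<bar>(a^2 - a - 1 - t^2 - 2 * t) / ((a + t)^2 * (a + t + 1)^2)\<bar> \<le> 1 / (a + 1)^2"
proof -
  have t0: "0 \<le> t" "t \<le> 1" using t by auto
  have pos: "a + t > 0" "a + t + 1 > 0" using a t0 by linarith+
  have N: "\<bar>a^2 - a - 1 - t^2 - 2 * t\<bar> \<le> (a + t)^2"
  proof -
    have "a^2 - a - 1 - t^2 - 2 * t \<le> (a + t)^2"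
      using a t0 by (simp add: power2_eq_square algebra_simps)
    moreover have "-(a^2 - a - 1 - t^2 - 2 * t) \<le> (a + t)^2"
    proof -
      have h: "a * 1 \<le> a * a" using a by (intro mult_left_mono) auto
      have "a + 1 \<le> 2 * a^2" unfolding power2_eq_square using h a by linarith
      moreover have "2 * t \<le> 2 * a * t" using a t0 by (simp add: mult_right_mono)
      ultimately show ?thesis by (simp add: power2_eq_square algebra_simps)
    qed
    ultimately show ?thesis by linarith
  qed
  have "\<bar>(a^2 - a - 1 - t^2 - 2 * t) / ((a + t)^2 * (a + t + 1)^2)\<bar>
      = \<bar>a^2 - a - 1 - t^2 - 2 * t\<bar> / ((a + t)^2 * (a + t + 1)^2)"
    by (simp add: abs_divide)
  also have "\<dots> \<le> (a + t)^2 / ((a + t)^2 * (a + t + 1)^2)"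
    using N pos by (intro divide_right_mono) auto
  also have "\<dots> = 1 / (a + t + 1)^2" using pos by (simp add: field_simps)
  also have "\<dots> \<le> 1 / (a + 1)^2"
    using pos t0 a by (intro divide_left_mono power_mono) auto
  finally show ?thesis .
qed

lemma P2:
  fixes a x y :: real
  assumes a: "1 \<le> a" and x: "x \<in> {0..1}" and y: "y \<in> {0..1}"
  shows "\<bar>ww a x - ww a y\<bar> * uu a y \<le> 1 / (a * (a + 1)^2) * \<bar>x - y\<bar>"
proof -
  have w: "\<bar>ww a x - ww a y\<bar> \<le> 1 / (a + 1)^2 * \<bar>x - y\<bar>"
    by (rule lip_deriv[OF ww_deriv ww_deriv_bound x y]) (use a in auto)
  have u: "uu a y \<le> 1 / a" "0 \<le> uu a y" using a y by (auto simp: uu_def intro!: divide_left_mono)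
  have "\<bar>ww a x - ww a y\<bar> * uu a y \<le> (1 / (a + 1)^2 * \<bar>x - y\<bar>) * (1 / a)"
    using w u by (intro mult_mono) auto
  also have "\<dots> = 1 / (a * (a + 1)^2) * \<bar>x - y\<bar>" by simp
  finally show ?thesis .
qed



definition lipS :: "real \<Rightarrow> (real \<Rightarrow> real) \<Rightarrow> bool" where
  "lipS L f = (\<forall>x\<in>{0..1}. \<forall>y\<in>{0..1}. \<bar>f x - f y\<bar> \<le> L * \<bar>x - y\<bar>)"

definition bndS :: "real \<Rightarrow> (real \<Rightarrow> real) \<Rightarrow> bool" where
  "bndS B f = (\<forall>x\<in>{0..1}. \<bar>f x\<bar> \<le> B)"

definition Pr :: "(real \<Rightarrow> real) \<Rightarrow> real \<Rightarrow> real" where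
  "Pr f y = (\<Sum>n. ww (real n + 1) y * f (uu (real n + 1) y))"

lemma uu_in: "y \<in> {0..1} \<Longrightarrow> uu (real n + 1) y \<in> {0..1}"
  by (auto simp: uu_def)

lemma summable_ww: "0 \<le> y \<Longrightarrow> summable (\<lambda>n. ww (real n + 1) y)"
  using ww_sums by (auto simp: sums_iff)

lemma suminf_ww: "0 \<le> y \<Longrightarrow> (\<Sum>n. ww (real n + 1) y) = 1"
  using ww_sums by (auto simp: sums_iff)

lemma Pr_summable:
  assumes B: "bndS B f" and y: "y \<in> {0..1}"
  shows "summable (\<lambda>n. ww (real n + 1) y * f (uu (real n + 1) y))"
proof (rule summable_comparison_test)
  show "summable (\<lambda>n. B * ww (real n + 1) y)" using summable_ww[of y] y by (auto intro: summable_mult)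
  show "\<exists>N. \<forall>n\<ge>N. norm (ww (real n + 1) y * f (uu (real n + 1) y)) \<le> B * ww (real n + 1) y"
  proof (intro exI allI impI)
    fix n :: nat
    have "\<bar>f (uu (real n + 1) y)\<bar> \<le> B" using B uu_in[OF y] by (auto simp: bndS_def)
    moreover have "0 \<le> ww (real n + 1) y" using y by (intro ww_nonneg) auto
    ultimately show "norm (ww (real n + 1) y * f (uu (real n + 1) y)) \<le> B * ww (real n + 1) y"
      by (simp add: abs_mult mult.commute[of B] mult_left_mono)
  qed
qed

lemma Pr_bnd:
  assumes B: "bndS B f"
  shows "bndS B (Pr f)"
  unfolding bndS_def
proof
  fix y :: real assume y: "y \<in> {0..1}"
  have s1: "summable (\<lambda>n. B * ww (real n + 1) y)" using summable_ww[of y] y by (auto intro: summable_mult)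
  have le: "norm (ww (real n + 1) y * f (uu (real n + 1) y)) \<le> B * ww (real n + 1) y" for n
  proof -
    have "\<bar>f (uu (real n + 1) y)\<bar> \<le> B" using B uu_in[OF y] by (auto simp: bndS_def)
    moreover have "0 \<le> ww (real n + 1) y" using y by (intro ww_nonneg) auto
    ultimately show ?thesis by (simp add: abs_mult mult.commute[of B] mult_left_mono)
  qed
  have s2: "summable (\<lambda>n. norm (ww (real n + 1) y * f (uu (real n + 1) y)))"
    by (rule summable_comparison_test[OF _ s1]) (use le in auto)
  have "\<bar>Pr f y\<bar> \<le> (\<Sum>n. norm (ww (real n + 1) y * f (uu (real n + 1) y)))"
    unfolding Pr_def using summable_norm[OF s2] by simp
  also have "\<dots> \<le> (\<Sum>n. B * ww (real n + 1) y)"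
    by (rule suminf_le[OF le s2 s1])
  also have "\<dots> = B" using suminf_ww[of y] suminf_mult[OF summable_ww[of y], of B] y by simp
  finally show "\<bar>Pr f y\<bar> \<le> B" .
qed

lemma Pr_nonneg:
  assumes B: "bndS B f" and nn: "\<And>x. x \<in> {0..1} \<Longrightarrow> 0 \<le> f x" and y: "y \<in> {0..1}"
  shows "0 \<le> Pr f y"
  unfolding Pr_def
  by (rule suminf_nonneg[OF Pr_summable[OF B y]])
     (use y uu_in[OF y] nn in \<open>auto intro!: mult_nonneg_nonneg ww_nonneg\<close>)

definition bseq :: "nat \<Rightarrow> real" where
  "bseq n = (real n + 3) / ((real n + 1)^2 * (real n + 2)^2)"

definition cseq :: "nat \<Rightarrow> real" where
  "cseq n = 3 / 10 * (1 / (real n + 1) - 1 / (real (Suc n) + 1)) +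
     (if n \<in> {0, 1, 2} then [3 / 5, 11 / 180, 7 / 720] ! n else 0)"

lemma cseq_sums: "cseq sums (699 / 720)"
proof -
  define f where "f n = 1 / (real n + 1)" for n
  have "LIM n sequentially. 1 + real n :> at_top"
    by (rule filterlim_tendsto_add_at_top[OF tendsto_const filterlim_real_sequentially])
  then have "(\<lambda>n. inverse (1 + real n)) \<longlonglongrightarrow> 0" by (rule tendsto_inverse_0_at_top)
  moreover have "f = (\<lambda>n. inverse (1 + real n))" by (auto simp: f_def inverse_eq_divide add_ac)
  ultimately have "f \<longlonglongrightarrow> 0" by simp
  then have "(\<lambda>n. f n - f (Suc n)) sums (f 0 - 0)" by (rule telescope_sums')
  then have t: "(\<lambda>n. 3 / 10 * (f n - f (Suc n))) sums (3 / 10 * (f 0 - 0))" by (rule sums_mult)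
  have e: "(\<lambda>n. if n \<in> {0, 1, 2} then [3 / 5, 11 / 180, 7 / 720] ! n else 0) sums
      (\<Sum>n\<in>{0, 1, 2::nat}. [3 / 5, 11 / 180, 7 / 720 :: real] ! n)"
    by (rule sums_If_finite_set) simp
  have "cseq sums (3 / 10 * (f 0 - 0) + (\<Sum>n\<in>{0, 1, 2::nat}. [3 / 5, 11 / 180, 7 / 720 :: real] ! n))"
    unfolding cseq_def[abs_def] using sums_add[OF t e] by (simp add: f_def)
  moreover have "3 / 10 * (f 0 - 0) + (\<Sum>n\<in>{0, 1, 2::nat}. [3 / 5, 11 / 180, 7 / 720 :: real] ! n) = 699 / 720"
    by (simp add: f_def)
  ultimately show ?thesis by simp
qed

lemma aux_lin:
  fixes z :: real assumes "9 * z \<le> 3 * (z * z)" "24 \<le> 8 * z"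
  shows "10 * (z + 3) \<le> 3 * (z * z) + 9 * z + 6"
  using assms by (smt (verit))

lemma bseq_le_cseq: "bseq n \<le> cseq n"
proof (cases "n \<le> 2")
  case True
  then have "n = 0 \<or> n = 1 \<or> n = 2" by auto
  then show ?thesis by (auto simp: bseq_def cseq_def power2_eq_square)
next
  case False
  then have n3: "real n \<ge> 3" by simp
  have c: "cseq n = 3 / 10 / ((real n + 1) * (real n + 2))"
  proof -
    have "1 / (real n + 1) - 1 / (real (Suc n) + 1) = 1 / ((real n + 1) * (real n + 2))"
      by (simp add: divide_simps)
    then show ?thesis using False by (simp add: cseq_def)
  qed
  have p: "(real n + 1) * (real n + 2) > 0" using n3 by simp
  have "10 * (real n + 3) \<le> 3 * ((real n + 1) * (real n + 2))"
  proof -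
    have h: "real n * real n \<ge> 3 * real n" using n3 by (intro mult_right_mono) auto
    have "3 * ((real n + 1) * (real n + 2)) = 3 * (real n * real n) + 9 * real n + 6"
      by (simp add: algebra_simps)
    moreover have "10 * (real n + 3) \<le> 3 * (real n * real n) + 9 * real n + 6"
    proof -
      have "3 * (real n * real n) \<ge> 9 * real n" using h by linarith
      moreover have "8 * real n \<ge> 24" using n3 by linarith
      ultimately show ?thesis by (rule aux_lin)
    qed
    ultimately show ?thesis by simp
  qed
  then have "(real n + 3) / ((real n + 1) * (real n + 2)) \<le> 3 / 10"
    using p by (simp add: pos_divide_le_eq)
  then have "(real n + 3) / ((real n + 1) * (real n + 2)) / ((real n + 1) * (real n + 2))
       \<le> 3 / 10 / ((real n + 1) * (real n + 2))"
    using p by (intro divide_right_mono) auto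
  then show ?thesis unfolding c bseq_def by (simp add: power2_eq_square mult_ac)
qed

lemma bseq_nonneg: "0 \<le> bseq n"
  by (simp add: bseq_def)

lemma bseq_summable: "summable bseq"
  by (rule summable_comparison_test[OF _ sums_summable[OF cseq_sums]])
     (use bseq_le_cseq bseq_nonneg in auto)

lemma bseq_suminf: "suminf bseq \<le> 699 / 720"
  using suminf_le[OF bseq_le_cseq bseq_summable sums_summable[OF cseq_sums]] cseq_sums
  by (simp add: sums_iff)

lemma term_bound:
  fixes f :: "real \<Rightarrow> real"
  assumes L: "lipS L f" "0 \<le> L" and x: "x \<in> {0..1}" and y: "y \<in> {0..1}"
  shows "\<bar>ww (real n + 1) x * (f (uu (real n + 1) x) - f (uu (real n + 1) y))
          + (ww (real n + 1) x - ww (real n + 1) y) * (f (uu (real n + 1) y) - f 0)\<bar>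
         \<le> L * \<bar>x - y\<bar> * bseq n"
proof -
  define a where "a = real n + 1"
  have a: "1 \<le> a" by (simp add: a_def)
  have ux: "uu a x \<in> {0..1}" and uy: "uu a y \<in> {0..1}" using uu_in x y by (auto simp: a_def)
  have w0: "0 \<le> ww a x" using x a by (intro ww_nonneg) auto
  have l1: "\<bar>f (uu a x) - f (uu a y)\<bar> \<le> L * \<bar>uu a x - uu a y\<bar>" using L(1) ux uy unfolding lipS_def by blast
  have bs: "2 / (a^2 * (a + 1)^2) + 1 / (a * (a + 1)^2) = bseq n"
  proof -
    have gen: "\<And>a::real. a > 0 \<Longrightarrow> 2 / (a^2 * (a + 1)^2) + 1 / (a * (a + 1)^2) = (a + 2) / (a^2 * (a + 1)^2)"
    proof -
      fix a :: real assume a: "a > 0"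
      have "1 / (a * (a + 1)^2) = a / (a^2 * (a + 1)^2)" using a by (simp add: power2_eq_square)
      then show "2 / (a^2 * (a + 1)^2) + 1 / (a * (a + 1)^2) = (a + 2) / (a^2 * (a + 1)^2)"
        by (simp add: add_divide_distrib)
    qed
    have "bseq n = (a + 2) / (a^2 * (a + 1)^2)"
      by (simp add: bseq_def a_def add.assoc)
    then show ?thesis using gen[of a] a by simp
  qed
  have h0: "(0::real) \<in> {0..1}" by simp
  have l2: "\<bar>f (uu a y) - f 0\<bar> \<le> L * \<bar>uu a y - 0\<bar>" using L(1) uy h0 unfolding lipS_def by blast
  have "\<bar>ww a x * (f (uu a x) - f (uu a y)) + (ww a x - ww a y) * (f (uu a y) - f 0)\<bar>
      \<le> ww a x * \<bar>f (uu a x) - f (uu a y)\<bar> + \<bar>ww a x - ww a y\<bar> * \<bar>f (uu a y) - f 0\<bar>"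
  proof -
    have "\<bar>ww a x * (f (uu a x) - f (uu a y)) + (ww a x - ww a y) * (f (uu a y) - f 0)\<bar>
       \<le> \<bar>ww a x * (f (uu a x) - f (uu a y))\<bar> + \<bar>(ww a x - ww a y) * (f (uu a y) - f 0)\<bar>"
      by (rule abs_triangle_ineq)
    also have "\<dots> = ww a x * \<bar>f (uu a x) - f (uu a y)\<bar> + \<bar>ww a x - ww a y\<bar> * \<bar>f (uu a y) - f 0\<bar>"
      using w0 by (simp only: abs_mult abs_of_nonneg)
    finally show ?thesis .
  qed
  also have "\<dots> \<le> ww a x * (L * \<bar>uu a x - uu a y\<bar>) + \<bar>ww a x - ww a y\<bar> * (L * uu a y)"
    using l1 l2 uy w0 by (intro add_mono mult_left_mono) auto
  also have "\<dots> = L * (ww a x * \<bar>uu a x - uu a y\<bar> + \<bar>ww a x - ww a y\<bar> * uu a y)"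
    by (simp add: algebra_simps)
  also have "\<dots> \<le> L * (2 / (a^2 * (a + 1)^2) * \<bar>x - y\<bar> + 1 / (a * (a + 1)^2) * \<bar>x - y\<bar>)"
    using L(2) P1[OF a x y] P2[OF a x y] by (intro mult_left_mono add_mono) auto
  also have "\<dots> = L * \<bar>x - y\<bar> * (2 / (a^2 * (a + 1)^2) + 1 / (a * (a + 1)^2))"
    by (simp add: algebra_simps)
  also have "\<dots> = L * \<bar>x - y\<bar> * bseq n" using bs by simp
  finally show ?thesis unfolding a_def .
qed

lemma Pr_contr:
  assumes L: "lipS L f" "0 \<le> L" and B: "bndS B f"
  shows "lipS (699 / 720 * L) (Pr f)"
  unfolding lipS_def
proof (intro ballI)
  fix x y :: real assume x: "x \<in> {0..1}" and y: "y \<in> {0..1}"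
  define w where "w n t = ww (real n + 1) t" for n t
  define g where "g n t = f (uu (real n + 1) t)" for n t
  define d where "d n = w n x * (g n x - g n y) + (w n x - w n y) * (g n y - f 0)" for n
  have sx: "(\<lambda>n. w n x * g n x) sums Pr f x"
    using Pr_summable[OF B x] by (simp add: Pr_def w_def g_def summable_sums)
  have sy: "(\<lambda>n. w n y * g n y) sums Pr f y"
    using Pr_summable[OF B y] by (simp add: Pr_def w_def g_def summable_sums)
  have s0x: "(\<lambda>n. w n x * f 0) sums (1 * f 0)"
    using sums_mult2[OF ww_sums[of x], of "f 0"] x unfolding w_def by simp
  have s0y: "(\<lambda>n. w n y * f 0) sums (1 * f 0)"
    using sums_mult2[OF ww_sums[of y], of "f 0"] y unfolding w_def by simp
  have "(\<lambda>n. (w n x * g n x - w n y * g n y) - (w n x * f 0 - w n y * f 0)) sums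
        ((Pr f x - Pr f y) - (1 * f 0 - 1 * f 0))"
    by (intro sums_diff sx sy s0x s0y)
  moreover have "(\<lambda>n. (w n x * g n x - w n y * g n y) - (w n x * f 0 - w n y * f 0)) = d"
    by (auto simp: d_def algebra_simps)
  ultimately have sd: "d sums (Pr f x - Pr f y)" by simp
  have db: "\<bar>d n\<bar> \<le> L * \<bar>x - y\<bar> * bseq n" for n
    unfolding d_def w_def g_def by (rule term_bound[OF L x y])
  have sb: "summable (\<lambda>n. L * \<bar>x - y\<bar> * bseq n)" by (intro summable_mult bseq_summable)
  have sn: "summable (\<lambda>n. norm (d n))"
    by (rule summable_comparison_test[OF _ sb]) (use db in auto)
  have "\<bar>Pr f x - Pr f y\<bar> = norm (suminf d)" using sd by (simp add: sums_iff)
  also have "\<dots> \<le> (\<Sum>n. norm (d n))" by (rule summable_norm[OF sn])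
  also have "\<dots> \<le> (\<Sum>n. L * \<bar>x - y\<bar> * bseq n)" by (rule suminf_le[OF _ sn sb]) (use db in auto)
  also have "\<dots> = L * \<bar>x - y\<bar> * suminf bseq" by (rule suminf_mult[OF bseq_summable])
  also have "\<dots> \<le> L * \<bar>x - y\<bar> * (699 / 720)"
    using L(2) bseq_suminf by (intro mult_left_mono) auto
  finally show "\<bar>Pr f x - Pr f y\<bar> \<le> 699 / 720 * L * \<bar>x - y\<bar>" by (simp add: mult_ac)
qed



lemma Pr_meas[measurable]:
  assumes [measurable]: "f \<in> borel_measurable borel" shows "Pr f \<in> borel_measurable borel"
proof -
  have [measurable]: "\<And>n. (\<lambda>x. f (uu (real n + 1) x)) \<in> borel_measurable borel"
    by (rule measurable_compose[OF uu_meas]) simp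
  show ?thesis unfolding Pr_def[abs_def] by measurable
qed

lemma Pe_Pr:
  assumes B: "bndS B f" and nn: "\<And>x. x \<in> {0..1} \<Longrightarrow> 0 \<le> f x" and y: "y \<in> {0..1}"
  shows "Pe (\<lambda>x. ennreal (f x)) y = ennreal (Pr f y)"
proof -
  have nn2: "0 \<le> ww (real n + 1) y * f (uu (real n + 1) y)" for n
    using y uu_in[OF y] nn by (auto intro!: mult_nonneg_nonneg ww_nonneg)
  have "Pe (\<lambda>x. ennreal (f x)) y = (\<Sum>n. ennreal (ww (real n + 1) y * f (uu (real n + 1) y)))"
    unfolding Pe_def using y uu_in[OF y] nn
    by (intro suminf_cong) (auto simp: ennreal_mult ww_nonneg)
  also have "\<dots> = ennreal (Pr f y)"
    unfolding Pr_def by (rule suminf_ennreal2[OF nn2 Pr_summable[OF B y]])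
  finally show ?thesis .
qed

lemma transfer_real:
  assumes [measurable]: "f \<in> borel_measurable borel" "S \<in> sets borel"
    and B: "bndS B f" and nn: "\<And>x. x \<in> {0..1} \<Longrightarrow> 0 \<le> f x"
  shows "(\<integral>\<^sup>+x. ennreal (f x) * indicator S (gauss x) \<partial>gauss_measure)
       = (\<integral>\<^sup>+y. ennreal (Pr f y) * indicator S y \<partial>gauss_measure)"
proof -
  have "(\<integral>\<^sup>+x. ennreal (f x) * indicator S (gauss x) \<partial>gauss_measure)
       = (\<integral>\<^sup>+y. indicator S y * Pe (\<lambda>x. ennreal (f x)) y \<partial>gauss_measure)"
    by (rule transfer) auto
  also have "\<dots> = (\<integral>\<^sup>+y. ennreal (Pr f y) * indicator S y \<partial>gauss_measure)"
  proof (rule nn_integral_cong_AE)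
    show "AE y in gauss_measure. indicator S y * Pe (\<lambda>x. ennreal (f x)) y = ennreal (Pr f y) * indicator S y"
      using AE_gm
    proof eventually_elim
      fix y :: real assume "0 < y \<and> y < 1"
      then have "y \<in> {0..1}" by auto
      from Pe_Pr[OF B nn this] show "indicator S y * Pe (\<lambda>x. ennreal (f x)) y = ennreal (Pr f y) * indicator S y"
        by (simp add: mult.commute)
    qed
  qed
  finally show ?thesis .
qed

lemma Pr_nonneg': "bndS B f \<Longrightarrow> (\<And>x. x \<in> {0..1} \<Longrightarrow> 0 \<le> f x) \<Longrightarrow> (\<And>x. x \<in> {0..1} \<Longrightarrow> 0 \<le> Pr f x)"
  using Pr_nonneg by blast

lemma transfer_iter:
  assumes "f \<in> borel_measurable borel" "S \<in> sets borel"
    and "bndS B f" and "\<And>x. x \<in> {0..1} \<Longrightarrow> 0 \<le> f x"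
  shows "(\<integral>\<^sup>+x. ennreal (f x) * indicator S ((gauss ^^ j) x) \<partial>gauss_measure)
       = (\<integral>\<^sup>+y. ennreal ((Pr ^^ j) f y) * indicator S y \<partial>gauss_measure)"
  using assms
proof (induction j arbitrary: f)
  case 0 then show ?case by simp
next
  case (Suc j)
  note [measurable] = Suc.prems(1,2)
  have S': "(gauss ^^ j) -` S \<in> sets borel" by measurable
  have "(\<integral>\<^sup>+x. ennreal (f x) * indicator S ((gauss ^^ Suc j) x) \<partial>gauss_measure)
      = (\<integral>\<^sup>+x. ennreal (f x) * indicator ((gauss ^^ j) -` S) (gauss x) \<partial>gauss_measure)"
    by (simp add: funpow_Suc_right indicator_def del: funpow.simps)
  also have "\<dots> = (\<integral>\<^sup>+y. ennreal (Pr f y) * indicator ((gauss ^^ j) -` S) y \<partial>gauss_measure)"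
    by (rule transfer_real[OF Suc.prems(1) S' Suc.prems(3,4)])
  also have "\<dots> = (\<integral>\<^sup>+y. ennreal (Pr f y) * indicator S ((gauss ^^ j) y) \<partial>gauss_measure)"
    by (simp add: indicator_def)
  also have "\<dots> = (\<integral>\<^sup>+y. ennreal ((Pr ^^ j) (Pr f) y) * indicator S y \<partial>gauss_measure)"
    by (rule Suc.IH) (use Suc.prems Pr_bnd Pr_nonneg in auto)
  also have "(Pr ^^ j) (Pr f) = (Pr ^^ Suc j) f" by (simp add: funpow_Suc_right del: funpow.simps)
  finally show ?case .
qed

lemma inf_bound:
  assumes [measurable]: "g \<in> borel_measurable borel"
    and I: "(\<integral>\<^sup>+y. ennreal (g y) \<partial>gauss_measure) = ennreal m" and m: "0 \<le> m"
    and c: "\<And>z. z \<in> {0..1} \<Longrightarrow> c \<le> g z"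
  shows "c \<le> m"
proof (cases "c \<le> 0")
  case True then show ?thesis using m by simp
next
  case False
  have "ennreal c = (\<integral>\<^sup>+y. ennreal c \<partial>gauss_measure)"
    using emeasure_gm_UNIV by simp
  also have "\<dots> \<le> (\<integral>\<^sup>+y. ennreal (g y) \<partial>gauss_measure)"
    by (rule nn_integral_mono_AE) (use AE_gm in \<open>eventually_elim, auto intro!: ennreal_leI c\<close>)
  finally show ?thesis using I False by (simp add: ennreal_le_iff m)
qed



lemma Fq_bnd:
  assumes g: "goodp p" and y: "y \<in> {0..1}"
  shows "\<bar>Fq p y\<bar> \<le> 2"
proof -
  obtain \<alpha> \<beta> \<gamma> \<delta> where pp: "p = (\<alpha>, \<beta>, \<gamma>, \<delta>)" by (cases p) auto
  have h: "1 \<le> \<alpha>" "0 \<le> \<beta>" "1 \<le> \<gamma>" "0 \<le> \<delta>" using g by (auto simp: goodp_def pp)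
  have y0: "0 \<le> y" "y \<le> 1" using y by auto
  have d1: "1 \<le> \<alpha> + \<beta> * y" "1 \<le> \<gamma> + \<delta> * y" using h y0 by (auto intro!: add_increasing2 mult_nonneg_nonneg)
  have dd: "1 \<le> (\<alpha> + \<beta> * y) * (\<gamma> + \<delta> * y)" using d1 by (metis mult_mono' mult_1 zero_le_one)
  have "Fq p y = (1 + y) / ((\<alpha> + \<beta> * y) * (\<gamma> + \<delta> * y))" by (simp add: Fq_def pp)
  also have "\<dots> \<le> (1 + y) / 1" using dd y0 by (intro divide_left_mono) auto
  also have "\<dots> \<le> 2" using y0 by simp
  finally show ?thesis using Fq_nonneg[OF g, of y] y0 by simp
qed

lemma Fq_ratio:
  assumes g: "goodp p" and y: "y \<in> {0..1}" and z: "z \<in> {0..1}"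
  shows "Fq p y \<le> 8 * Fq p z"
proof -
  obtain \<alpha> \<beta> \<gamma> \<delta> where pp: "p = (\<alpha>, \<beta>, \<gamma>, \<delta>)" by (cases p) auto
  have h: "1 \<le> \<alpha>" "0 \<le> \<beta>" "\<beta> \<le> \<alpha>" "1 \<le> \<gamma>" "0 \<le> \<delta>" "\<delta> \<le> \<gamma>" using g by (auto simp: goodp_def pp)
  have y0: "0 \<le> y" "y \<le> 1" and z0: "0 \<le> z" "z \<le> 1" using y z by auto
  have py: "0 < \<alpha> + \<beta> * y" "0 < \<gamma> + \<delta> * y" using h y0 by (auto intro!: add_pos_nonneg mult_nonneg_nonneg)
  have pz: "0 < \<alpha> + \<beta> * z" "0 < \<gamma> + \<delta> * z" using h z0 by (auto intro!: add_pos_nonneg mult_nonneg_nonneg)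
  have a1: "1 + y \<le> 2 * (1 + z)" using y0 z0 by simp
  have "\<beta> * z \<le> \<alpha>" using h z0 by (metis mult_right_le_one_le order_trans)
  then have "\<alpha> + \<beta> * z \<le> 2 * (\<alpha> + \<beta> * y)" using h y0 by (smt (verit) mult_nonneg_nonneg)
  then have a2: "1 / (\<alpha> + \<beta> * y) \<le> 2 / (\<alpha> + \<beta> * z)" using py pz by (simp add: divide_simps)
  have "\<delta> * z \<le> \<gamma>" using h z0 by (metis mult_right_le_one_le order_trans)
  then have "\<gamma> + \<delta> * z \<le> 2 * (\<gamma> + \<delta> * y)" using h y0 by (smt (verit) mult_nonneg_nonneg)
  then have a3: "1 / (\<gamma> + \<delta> * y) \<le> 2 / (\<gamma> + \<delta> * z)" using py pz by (simp add: divide_simps)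
  have "Fq p y = (1 + y) * (1 / (\<alpha> + \<beta> * y)) * (1 / (\<gamma> + \<delta> * y))" by (simp add: Fq_def pp)
  also have "\<dots> \<le> (2 * (1 + z)) * (2 / (\<alpha> + \<beta> * z)) * (2 / (\<gamma> + \<delta> * z))"
    using a1 a2 a3 py pz y0 by (intro mult_mono) auto
  also have "\<dots> = 8 * Fq p z" by (simp add: Fq_def pp)
  finally show ?thesis .
qed

lemma Fq_deriv:
  assumes g: "goodp p" and t: "t \<in> {0..1}"
  shows "\<exists>d. DERIV (Fq p) t :> d \<and> \<bar>d\<bar> \<le> Fq p t"
proof -
  obtain \<alpha> \<beta> \<gamma> \<delta> where pp: "p = (\<alpha>, \<beta>, \<gamma>, \<delta>)" by (cases p) auto
  have h: "1 \<le> \<alpha>" "0 \<le> \<beta>" "\<beta> \<le> \<alpha>" "1 \<le> \<gamma>" "0 \<le> \<delta>" "\<delta> \<le> \<gamma>" using g by (auto simp: goodp_def pp)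
  have t0: "0 \<le> t" "t \<le> 1" using t by auto
  define A where "A = \<alpha> + \<beta> * t"
  define G where "G = \<gamma> + \<delta> * t"
  have A: "0 < A" "(1 + t) * \<beta> \<le> A" using h t0 unfolding A_def
    by (auto intro!: add_pos_nonneg mult_nonneg_nonneg simp: algebra_simps)
  have G: "0 < G" "(1 + t) * \<delta> \<le> G" using h t0 unfolding G_def
    by (auto intro!: add_pos_nonneg mult_nonneg_nonneg simp: algebra_simps)
  have nz: "A * G \<noteq> 0" using A G by simp
  have d1: "DERIV (\<lambda>t. 1 + t) t :> 1" by (auto intro!: derivative_eq_intros)
  have d2: "DERIV (\<lambda>t. (\<alpha> + \<beta> * t) * (\<gamma> + \<delta> * t)) t :> (\<beta> * G + A * \<delta>)"
    unfolding A_def G_def by (auto intro!: derivative_eq_intros simp: algebra_simps)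
  have dv: "DERIV (Fq p) t :> (1 * (A * G) - (1 + t) * (\<beta> * G + A * \<delta>)) / ((A * G) * (A * G))"
    using DERIV_divide[OF d1 d2] nz unfolding A_def G_def by (simp add: Fq_def[abs_def] pp)
  have n1: "0 \<le> (1 + t) * (\<beta> * G + A * \<delta>)" using A G h t0 by (auto intro!: mult_nonneg_nonneg add_nonneg_nonneg)
  have n2: "(1 + t) * (\<beta> * G + A * \<delta>) \<le> 2 * (A * G)"
  proof -
    have "(1 + t) * (\<beta> * G) \<le> A * G" using A G by (simp add: mult.assoc[symmetric] mult_right_mono)
    moreover have "(1 + t) * (A * \<delta>) \<le> A * G"
    proof -
      have "A * ((1 + t) * \<delta>) \<le> A * G" using A G by (intro mult_left_mono) auto
      then show ?thesis by (simp add: mult_ac)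
    qed
    ultimately show ?thesis by (simp add: distrib_left)
  qed
  have N: "\<bar>1 * (A * G) - (1 + t) * (\<beta> * G + A * \<delta>)\<bar> \<le> A * G" using n1 n2 by simp
  have XX: "0 < (A * G) * (A * G)" using A G by simp
  have "\<bar>(1 * (A * G) - (1 + t) * (\<beta> * G + A * \<delta>)) / ((A * G) * (A * G))\<bar>
      = \<bar>1 * (A * G) - (1 + t) * (\<beta> * G + A * \<delta>)\<bar> / ((A * G) * (A * G))"
    using XX by (simp add: abs_divide)
  also have "\<dots> \<le> (A * G) / ((A * G) * (A * G))"
    by (rule divide_right_mono[OF N]) (use XX in simp)
  also have "\<dots> = 1 / (A * G)" using nz by simp
  also have "\<dots> \<le> (1 + t) / (A * G)" using A G t0 by (intro divide_right_mono) auto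
  also have "\<dots> = Fq p t" by (simp add: Fq_def pp A_def G_def)
  finally show ?thesis using dv by blast
qed

lemma Fq_lip:
  assumes g: "goodp p" and M: "\<And>t. t \<in> {0..1} \<Longrightarrow> Fq p t \<le> M"
  shows "lipS M (Fq p)"
  unfolding lipS_def
proof (intro ballI)
  fix x y :: real assume x: "x \<in> {0..1}" and y: "y \<in> {0..1}"
  define d where "d t = (SOME d. DERIV (Fq p) t :> d \<and> \<bar>d\<bar> \<le> Fq p t)" for t
  have dd: "DERIV (Fq p) t :> d t \<and> \<bar>d t\<bar> \<le> Fq p t" if "t \<in> {0..1}" for t
    unfolding d_def by (rule someI_ex[OF Fq_deriv[OF g that]])
  show "\<bar>Fq p x - Fq p y\<bar> \<le> M * \<bar>x - y\<bar>"
    by (rule lip_deriv[OF _ _ x y]) (use dd M in \<open>auto intro: order_trans\<close>)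
qed



lemma iter_props:
  assumes L: "lipS L f" "0 \<le> L" and B: "bndS B f" and nn: "\<forall>x\<in>{0..1}. 0 \<le> f x"
    and m: "f \<in> borel_measurable borel"
  shows "lipS ((699 / 720)^j * L) ((Pr ^^ j) f) \<and> bndS B ((Pr ^^ j) f) \<and>
         (\<forall>x\<in>{0..1}. 0 \<le> (Pr ^^ j) f x) \<and> (Pr ^^ j) f \<in> borel_measurable borel"
proof (induction j)
  case 0 then show ?case using assms by simp
next
  case (Suc j)
  then have l: "lipS ((699 / 720)^j * L) ((Pr ^^ j) f)" and b: "bndS B ((Pr ^^ j) f)"
    and n: "\<forall>x\<in>{0..1}. 0 \<le> (Pr ^^ j) f x" and mm: "(Pr ^^ j) f \<in> borel_measurable borel" by auto
  have "0 \<le> (699 / 720 :: real)^j * L" using L(2) by simp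
  from Pr_contr[OF l this b] have "lipS ((699 / 720)^Suc j * L) (Pr ((Pr ^^ j) f))"
    by (simp add: mult.assoc)
  moreover have "bndS B (Pr ((Pr ^^ j) f))" by (rule Pr_bnd[OF b])
  moreover have "\<forall>x\<in>{0..1}. 0 \<le> Pr ((Pr ^^ j) f) x" using Pr_nonneg[OF b] n by auto
  moreover have "Pr ((Pr ^^ j) f) \<in> borel_measurable borel" using mm by simp
  ultimately show ?case by simp
qed

lemma emeasure_D:
  assumes pos: "\<forall>d\<in>set s. 0 < d"
  shows "emeasure gauss_measure (D s) = (\<integral>\<^sup>+y. ennreal (FF s y) \<partial>gauss_measure)"
  using cyl_formula[OF pos, of "\<lambda>_. 1"] by simp

lemma FF_le:
  assumes pos: "\<forall>d\<in>set s. 0 < d" and t: "t \<in> {0..1}"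
  shows "FF s t \<le> 8 * measure gauss_measure (D s)"
proof -
  have g: "goodp (Fp s)" by (rule goodp_Fp[OF pos])
  have I: "(\<integral>\<^sup>+y. ennreal (FF s y) \<partial>gauss_measure) = ennreal (measure gauss_measure (D s))"
    using emeasure_D[OF pos] gm.emeasure_eq_measure by simp
  have "FF s t / 8 \<le> measure gauss_measure (D s)"
  proof (rule inf_bound[OF FF_meas I measure_nonneg])
    fix z :: real assume z: "z \<in> {0..1}"
    from Fq_ratio[OF g t z] show "FF s t / 8 \<le> FF s z" by (simp add: FF_def)
  qed
  then show ?thesis by simp
qed

lemma mixing:
  assumes pos: "\<forall>d\<in>set s. 0 < d"
  defines "mr \<equiv> measure gauss_measure (D s)"
  shows "emeasure gauss_measure (D s \<inter> (gauss ^^ (length s + j)) -` D s)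
         \<le> ennreal (mr * (mr + (699 / 720)^j * (8 * mr)))"
proof -
  let ?th = "699 / 720 :: real"
  let ?k = "length s"
  have g: "goodp (Fp s)" by (rule goodp_Fp[OF pos])
  have mr0: "0 \<le> mr" unfolding mr_def by simp
  have FFl: "lipS (8 * mr) (FF s)"
    unfolding FF_def by (rule Fq_lip[OF g]) (use FF_le[OF pos] in \<open>auto simp: FF_def mr_def\<close>)
  have FFb: "bndS 2 (FF s)" unfolding bndS_def FF_def using Fq_bnd[OF g] by auto
  have FFn: "\<forall>x\<in>{0..1}. 0 \<le> FF s x" unfolding FF_def using Fq_nonneg[OF g] by auto
  define G where "G = (Pr ^^ j) (FF s)"
  have Gp: "lipS (?th^j * (8 * mr)) G" "bndS 2 G" "\<forall>x\<in>{0..1}. 0 \<le> G x" "G \<in> borel_measurable borel"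
    using iter_props[OF FFl _ FFb FFn FF_meas, of j] mr0 unfolding G_def by auto
  note [measurable] = Gp(4)
  have IG: "(\<integral>\<^sup>+y. ennreal (G y) \<partial>gauss_measure) = ennreal mr"
  proof -
    have "(\<integral>\<^sup>+y. ennreal (G y) \<partial>gauss_measure) = (\<integral>\<^sup>+y. ennreal (G y) * indicator UNIV y \<partial>gauss_measure)" by simp
    also have "\<dots> = (\<integral>\<^sup>+x. ennreal (FF s x) * indicator UNIV ((gauss ^^ j) x) \<partial>gauss_measure)"
      unfolding G_def by (rule transfer_iter[symmetric, OF FF_meas _ FFb]) (use FFn in auto)
    also have "\<dots> = emeasure gauss_measure (D s)" using emeasure_D[OF pos] by simp
    also have "\<dots> = ennreal mr" unfolding mr_def by (simp add: gm.emeasure_eq_measure)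
    finally show ?thesis .
  qed
  have Gle: "G y \<le> mr + ?th^j * (8 * mr)" if y: "y \<in> {0..1}" for y
  proof -
    have "G y - ?th^j * (8 * mr) \<le> mr"
    proof (rule inf_bound[OF Gp(4) IG mr0])
      fix z :: real assume z: "z \<in> {0..1}"
      have "\<bar>G y - G z\<bar> \<le> ?th^j * (8 * mr) * \<bar>y - z\<bar>" using Gp(1) y z by (auto simp: lipS_def)
      also have "\<dots> \<le> ?th^j * (8 * mr) * 1" using y z mr0 by (intro mult_left_mono) auto
      finally show "G y - ?th^j * (8 * mr) \<le> G z" by simp
    qed
    then show ?thesis by simp
  qed
  have "emeasure gauss_measure (D s \<inter> (gauss ^^ (?k + j)) -` D s)
      = (\<integral>\<^sup>+x. indicator (D s) x * indicator ((gauss ^^ j) -` D s) ((gauss ^^ ?k) x) \<partial>gauss_measure)"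
  proof -
    have "(\<lambda>x. indicator (D s) x * indicator ((gauss ^^ j) -` D s) ((gauss ^^ ?k) x))
        = (indicator (D s \<inter> (gauss ^^ (?k + j)) -` D s) :: real \<Rightarrow> ennreal)"
      by (auto simp: indicator_def funpow_add add.commute[of ?k])
    then show ?thesis by simp
  qed
  also have "\<dots> = (\<integral>\<^sup>+y. ennreal (FF s y) * indicator ((gauss ^^ j) -` D s) y \<partial>gauss_measure)"
    by (rule cyl_formula[OF pos]) simp
  also have "\<dots> = (\<integral>\<^sup>+y. ennreal (FF s y) * indicator (D s) ((gauss ^^ j) y) \<partial>gauss_measure)"
    by (simp add: indicator_def)
  also have "\<dots> = (\<integral>\<^sup>+y. ennreal (G y) * indicator (D s) y \<partial>gauss_measure)"
    unfolding G_def by (rule transfer_iter[OF FF_meas _ FFb]) (use FFn in auto)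
  also have "\<dots> \<le> (\<integral>\<^sup>+y. ennreal (mr + ?th^j * (8 * mr)) * indicator (D s) y \<partial>gauss_measure)"
  proof (rule nn_integral_mono_AE)
    show "AE y in gauss_measure. ennreal (G y) * indicator (D s) y \<le> ennreal (mr + ?th^j * (8 * mr)) * indicator (D s) y"
      using AE_gm
    proof eventually_elim
      fix y :: real assume "0 < y \<and> y < 1"
      then have "G y \<le> mr + ?th^j * (8 * mr)" using Gle by auto
      then show "ennreal (G y) * indicator (D s) y \<le> ennreal (mr + ?th^j * (8 * mr)) * indicator (D s) y"
        by (intro mult_right_mono ennreal_leI) auto
    qed
  qed
  also have "\<dots> = ennreal (mr + ?th^j * (8 * mr)) * emeasure gauss_measure (D s)"
    by (simp add: nn_integral_cmult_indicator)
  also have "\<dots> = ennreal (mr * (mr + ?th^j * (8 * mr)))"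
  proof -
    have c0: "0 \<le> mr + ?th^j * (8 * mr)" using mr0 by simp
    have "emeasure gauss_measure (D s) = ennreal mr" by (simp add: mr_def gm.emeasure_eq_measure)
    then show ?thesis using ennreal_mult[OF c0 mr0] by (simp add: mult.commute)
  qed
  finally show ?thesis .
qed



definition dd :: "nat \<Rightarrow> nat \<Rightarrow> nat" where "dd a b = (if a \<le> b then b - a else a - b)"

lemma measure_invariance_n:
  "S \<in> sets borel \<Longrightarrow> measure gauss_measure ((gauss ^^ n) -` S) = measure gauss_measure S"
  using invariance_n[of S n] by (simp add: measure_def)

lemma pair_meas:
  assumes [measurable]: "S \<in> sets borel" and ab: "a \<le> b"
  shows "measure gauss_measure ((gauss ^^ a) -` S \<inter> (gauss ^^ b) -` S)
       = measure gauss_measure (S \<inter> (gauss ^^ (b - a)) -` S)"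
proof -
  have "(gauss ^^ a) -` S \<inter> (gauss ^^ b) -` S = (gauss ^^ a) -` (S \<inter> (gauss ^^ (b - a)) -` S)"
  proof -
    have "gauss ^^ b = (gauss ^^ (b - a)) \<circ> (gauss ^^ a)"
      using ab by (simp add: funpow_add[symmetric])
    then show ?thesis by auto
  qed
  moreover have "S \<inter> (gauss ^^ (b - a)) -` S \<in> sets borel" by measurable
  ultimately show ?thesis using measure_invariance_n[of "S \<inter> (gauss ^^ (b - a)) -` S" a] by simp
qed

lemma geom_le: "(\<Sum>i<n. (699 / 720 :: real)^i) \<le> 720 / 21"
proof -
  have "(\<Sum>i<n. (699 / 720 :: real)^i) = (1 - (699 / 720)^n) / (1 - 699 / 720)"
    by (simp add: sum_gp_strict)
  also have "\<dots> \<le> 1 / (1 - 699 / 720)" by (intro divide_right_mono) auto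
  finally show ?thesis by simp
qed

lemma dd_sum_le: "(\<Sum>b<N. (699 / 720 :: real)^(dd a b)) \<le> 2 * (720 / 21)"
proof -
  let ?th = "699 / 720 :: real"
  have split: "{..<N} = ({..<N} \<inter> {..a}) \<union> {a<..<N}" by auto
  have "(\<Sum>b<N. ?th^(dd a b)) = (\<Sum>b\<in>{..<N} \<inter> {..a}. ?th^(dd a b)) + (\<Sum>b\<in>{a<..<N}. ?th^(dd a b))"
    by (subst split, rule sum.union_disjoint) auto
  also have "(\<Sum>b\<in>{..<N} \<inter> {..a}. ?th^(dd a b)) \<le> (\<Sum>b\<in>{..<Suc a}. ?th^(Suc a - Suc b))"
  proof -
    have "(\<Sum>b\<in>{..<N} \<inter> {..a}. ?th^(dd a b)) = (\<Sum>b\<in>{..<N} \<inter> {..a}. ?th^(Suc a - Suc b))"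
      by (intro sum.cong) (auto simp: dd_def)
    also have "\<dots> \<le> (\<Sum>b\<in>{..<Suc a}. ?th^(Suc a - Suc b))"
      by (intro sum_mono2) auto
    finally show ?thesis .
  qed
  also have "(\<Sum>b\<in>{..<Suc a}. ?th^(Suc a - Suc b)) = (\<Sum>i<Suc a. ?th^i)"
    by (rule sum.nat_diff_reindex)
  also have "(\<Sum>b\<in>{a<..<N}. ?th^(dd a b)) \<le> (\<Sum>i<N. ?th^i)"
  proof -
    have "(\<Sum>b\<in>{a<..<N}. ?th^(dd a b)) = (\<Sum>b\<in>{a<..<N}. ?th^(b - a))"
      by (intro sum.cong) (auto simp: dd_def)
    also have "\<dots> = (\<Sum>i\<in>(\<lambda>b. b - a) ` {a<..<N}. ?th^i)"
      by (rule sum.reindex[symmetric, unfolded comp_def]) (auto simp: inj_on_def)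
    also have "\<dots> \<le> (\<Sum>i<N. ?th^i)" by (intro sum_mono2) auto
    finally show ?thesis .
  qed
  finally show ?thesis using geom_le[of "Suc a"] geom_le[of N] by linarith
qed

lemma dd_double_sum_le: "(\<Sum>a<N. \<Sum>b<N. (699 / 720 :: real)^(dd a b)) \<le> real N * (2 * (720 / 21))"
proof -
  have "(\<Sum>a<N. \<Sum>b<N. (699 / 720 :: real)^(dd a b)) \<le> (\<Sum>a<N. 2 * (720 / 21))"
    by (intro sum_mono dd_sum_le)
  then show ?thesis by simp
qed

lemma aux8: fixes x y m :: real assumes "0 < x" "x \<le> y" "0 \<le> m" shows "m \<le> 8 / x * m * y"
proof -
  have "m * x \<le> m * y" using assms by (intro mult_left_mono) auto
  also have "\<dots> \<le> 8 * m * y" using assms by (simp add: mult_right_mono)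
  finally have "m * x \<le> 8 * m * y" .
  then have "m \<le> 8 * m * y / x" using assms by (simp add: pos_le_divide_eq)
  then show ?thesis by simp
qed

lemma pair_bound:
  assumes pos: "\<forall>d\<in>set s. 0 < d"
  defines "mr \<equiv> measure gauss_measure (D s)"
  shows "measure gauss_measure (D s \<inter> (gauss ^^ d) -` D s)
         \<le> mr^2 + 8 / (699 / 720)^(length s) * mr * (699 / 720)^d"
proof -
  let ?th = "699 / 720 :: real"
  let ?k = "length s"
  have mr0: "0 \<le> mr" "mr \<le> 1" unfolding mr_def by (auto simp: measure_gm_le1)
  show ?thesis
  proof (cases "?k \<le> d")
    case True
    then obtain j where j: "d = ?k + j" using le_Suc_ex by blast
    have "emeasure gauss_measure (D s \<inter> (gauss ^^ d) -` D s) \<le> ennreal (mr * (mr + ?th^j * (8 * mr)))"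
      unfolding j mr_def by (rule mixing[OF pos])
    then have "measure gauss_measure (D s \<inter> (gauss ^^ d) -` D s) \<le> mr * (mr + ?th^j * (8 * mr))"
      using mr0 by (simp add: measure_def enn2real_leI)
    also have "\<dots> = mr^2 + 8 * ?th^j * (mr * mr)" by (simp add: power2_eq_square algebra_simps)
    also have "\<dots> \<le> mr^2 + 8 * ?th^j * mr"
      using mr0 by (intro add_left_mono mult_left_mono) (auto simp: mult_left_le_one_le)
    also have "8 * ?th^j * mr = 8 / ?th^?k * mr * ?th^d"
      by (simp add: j power_add)
    finally show ?thesis .
  next
    case False
    have "measure gauss_measure (D s \<inter> (gauss ^^ d) -` D s) \<le> mr"
      unfolding mr_def by (intro gm.finite_measure_mono) auto
    also have "mr \<le> 8 / ?th^?k * mr * ?th^d"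
    proof -
      have "?th^?k \<le> ?th^d" using False by (intro power_decreasing) auto
      then show ?thesis using mr0 by (intro aux8) auto
    qed
    also have "\<dots> \<le> mr^2 + 8 / ?th^?k * mr * ?th^d" by simp
    finally show ?thesis .
  qed
qed



definition XX :: "nat list \<Rightarrow> nat \<Rightarrow> real \<Rightarrow> real" where
  "XX s n x = indicator ((gauss ^^ n) -` D s) x"

definition AA :: "nat list \<Rightarrow> nat \<Rightarrow> real \<Rightarrow> real" where
  "AA s N x = (\<Sum>n<N. XX s n x)"

lemma XX_meas[measurable]: "XX s n \<in> borel_measurable borel"
  unfolding XX_def[abs_def] by measurable

lemma AA_meas[measurable]: "AA s N \<in> borel_measurable borel"
  unfolding AA_def[abs_def] by measurable

lemma int_XX: "integrable gauss_measure (XX s n)"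
  unfolding XX_def[abs_def] by (rule integrable_real_indicator) (auto simp: top.not_eq_extremum[symmetric] gm.emeasure_finite)

lemma int_XX2: "integrable gauss_measure (\<lambda>x. XX s a x * XX s b x)"
  unfolding XX_def[abs_def] indicator_inter_arith[symmetric] by (rule integrable_real_indicator) (auto simp: top.not_eq_extremum[symmetric] gm.emeasure_finite)

lemma int_AA: "integrable gauss_measure (AA s N)"
  unfolding AA_def[abs_def] by (intro Bochner_Integration.integrable_sum int_XX)

lemma AA_sq: "(AA s N x)^2 = (\<Sum>a<N. \<Sum>b<N. XX s a x * XX s b x)"
  unfolding AA_def power2_eq_square by (rule sum_product)

lemma int_AA2: "integrable gauss_measure (\<lambda>x. (AA s N x)^2)"
  unfolding AA_sq by (intro Bochner_Integration.integrable_sum int_XX2)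

lemma integral_XX: "(\<integral>x. XX s n x \<partial>gauss_measure) = measure gauss_measure (D s)"
  unfolding XX_def[abs_def] by (simp add: measure_invariance_n)

lemma integral_AA: "(\<integral>x. AA s N x \<partial>gauss_measure) = real N * measure gauss_measure (D s)"
  unfolding AA_def[abs_def] by (simp add: Bochner_Integration.integral_sum[OF int_XX] integral_XX)

lemma integral_XX2:
  assumes pos: "\<forall>d\<in>set s. 0 < d"
  shows "(\<integral>x. XX s a x * XX s b x \<partial>gauss_measure)
     \<le> (measure gauss_measure (D s))^2 + 8 / (699 / 720)^(length s) * measure gauss_measure (D s) * (699 / 720)^(dd a b)"
proof -
  have e: "(\<integral>x. XX s a x * XX s b x \<partial>gauss_measure) = measure gauss_measure ((gauss ^^ a) -` D s \<inter> (gauss ^^ b) -` D s)"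
    unfolding XX_def[abs_def] indicator_inter_arith[symmetric] by simp
  show ?thesis
  proof (cases "a \<le> b")
    case True
    then show ?thesis unfolding e pair_meas[OF D_meas True] using pair_bound[OF pos, of "b - a"]
      by (simp add: dd_def)
  next
    case False
    then have ba: "b \<le> a" by simp
    have "(gauss ^^ a) -` D s \<inter> (gauss ^^ b) -` D s = (gauss ^^ b) -` D s \<inter> (gauss ^^ a) -` D s" by auto
    then show ?thesis unfolding e using pair_meas[OF D_meas ba] pair_bound[OF pos, of "a - b"] False
      by (simp add: dd_def)
  qed
qed

lemma var_bound:
  assumes pos: "\<forall>d\<in>set s. 0 < d"
  defines "mr \<equiv> measure gauss_measure (D s)"
  defines "K \<equiv> 8 / (699 / 720 :: real)^(length s)"
  shows "(\<integral>x. (AA s N x - real N * mr)^2 \<partial>gauss_measure) \<le> K * mr * (real N * (2 * (720 / 21)))"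
proof -
  let ?th = "699 / 720 :: real"
  let ?c = "real N * mr"
  have K0: "0 \<le> K" unfolding K_def by simp
  have mr0: "0 \<le> mr" unfolding mr_def by simp
  have i2: "(\<integral>x. (AA s N x)^2 \<partial>gauss_measure) \<le> real N * real N * mr^2 + K * mr * (real N * (2 * (720 / 21)))"
  proof -
    have "(\<integral>x. (AA s N x)^2 \<partial>gauss_measure) = (\<Sum>a<N. \<Sum>b<N. \<integral>x. XX s a x * XX s b x \<partial>gauss_measure)"
      unfolding AA_sq by (simp add: Bochner_Integration.integral_sum int_XX2)
    also have "\<dots> \<le> (\<Sum>a<N. \<Sum>b<N. mr^2 + K * mr * ?th^(dd a b))"
      unfolding mr_def K_def by (intro sum_mono integral_XX2[OF pos])
    also have "\<dots> = real N * real N * mr^2 + K * mr * (\<Sum>a<N. \<Sum>b<N. ?th^(dd a b))"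
      by (simp add: sum.distrib sum_distrib_left)
    also have "\<dots> \<le> real N * real N * mr^2 + K * mr * (real N * (2 * (720 / 21)))"
      using K0 mr0 by (intro add_left_mono mult_left_mono dd_double_sum_le) auto
    finally show ?thesis .
  qed
  have "(\<lambda>x. (AA s N x - ?c)^2) = (\<lambda>x. ((AA s N x)^2 - 2 * ?c * AA s N x) + ?c^2)"
    by (auto simp: power2_eq_square algebra_simps)
  then have "(\<integral>x. (AA s N x - ?c)^2 \<partial>gauss_measure)
      = (\<integral>x. (AA s N x)^2 \<partial>gauss_measure) - 2 * ?c * (\<integral>x. AA s N x \<partial>gauss_measure) + ?c^2"
    using int_AA2 int_AA gm.emeasure_eq_measure emeasure_gm_UNIV
    by (simp add: Bochner_Integration.integral_diff Bochner_Integration.integral_add measure_def)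
  also have "\<dots> = (\<integral>x. (AA s N x)^2 \<partial>gauss_measure) - ?c^2"
    unfolding integral_AA mr_def by (simp add: power2_eq_square)
  also have "\<dots> \<le> K * mr * (real N * (2 * (720 / 21)))"
    using i2 by (simp add: power2_eq_square algebra_simps)
  finally show ?thesis .
qed



lemma AA_bounds: "0 \<le> AA s N x" "AA s N x \<le> real N"
proof -
  show "0 \<le> AA s N x" unfolding AA_def XX_def by (intro sum_nonneg) auto
  have "AA s N x \<le> (\<Sum>n<N. 1)" unfolding AA_def XX_def by (intro sum_mono) (auto simp: indicator_def)
  then show "AA s N x \<le> real N" by simp
qed

lemma AA_sq_le:
  assumes "0 \<le> mr"
  shows "(AA s N x - real N * mr)^2 \<le> (real N + real N * mr)^2"
proof -
  have "\<bar>AA s N x - real N * mr\<bar> \<le> real N + real N * mr"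
  proof -
    have "0 \<le> real N * mr" using assms by simp
    then show ?thesis using AA_bounds[of s N x] unfolding abs_le_iff by linarith
  qed
  then have "\<bar>AA s N x - real N * mr\<bar>^2 \<le> (real N + real N * mr)^2"
    by (intro power_mono) auto
  then show ?thesis by simp
qed

lemma cheb_dyn:
  assumes pos: "\<forall>d\<in>set s. 0 < d" and eps: "0 < \<epsilon>" and N: "1 \<le> N"
  defines "mr \<equiv> measure gauss_measure (D s)"
  defines "K \<equiv> 8 / (699 / 720 :: real)^(length s)"
  shows "measure gauss_measure {x. \<epsilon> * mr * real N < \<bar>AA s N x - mr * real N\<bar>}
      \<le> K * (2 * (720 / 21)) / (\<epsilon>^2 * mr * real N)"
proof (cases "mr = 0")
  case True
  have "{x. \<epsilon> * mr * real N < \<bar>AA s N x - mr * real N\<bar>} \<subseteq> (\<Union>n\<in>{..<N}. (gauss ^^ n) -` D s)"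
  proof
    fix x assume "x \<in> {x. \<epsilon> * mr * real N < \<bar>AA s N x - mr * real N\<bar>}"
    then have "AA s N x \<noteq> 0" using True by auto
    then obtain n where "n < N" "XX s n x \<noteq> 0" unfolding AA_def by (meson lessThan_iff sum.neutral)
    then show "x \<in> (\<Union>n\<in>{..<N}. (gauss ^^ n) -` D s)" by (auto simp: XX_def indicator_def)
  qed
  then have "measure gauss_measure {x. \<epsilon> * mr * real N < \<bar>AA s N x - mr * real N\<bar>}
      \<le> measure gauss_measure (\<Union>n\<in>{..<N}. (gauss ^^ n) -` D s)"
    by (intro gm.finite_measure_mono) auto
  also have "\<dots> \<le> (\<Sum>n<N. measure gauss_measure ((gauss ^^ n) -` D s))"
    by (intro gm.finite_measure_subadditive_finite) auto
  also have "\<dots> = 0" using True by (simp add: measure_invariance_n mr_def)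
  finally show ?thesis using True by simp
next
  case False
  then have mr0: "0 < mr" unfolding mr_def using measure_nonneg[of gauss_measure "D s"] by linarith
  define c where "c = (\<epsilon> * mr * real N)^2"
  have c0: "0 < c" unfolding c_def using mr0 eps N by simp
  have "{x. \<epsilon> * mr * real N < \<bar>AA s N x - mr * real N\<bar>} \<subseteq> {x \<in> space gauss_measure. c \<le> (AA s N x - real N * mr)^2}"
  proof
    fix x assume "x \<in> {x. \<epsilon> * mr * real N < \<bar>AA s N x - mr * real N\<bar>}"
    then have h: "\<epsilon> * mr * real N < \<bar>AA s N x - mr * real N\<bar>" by simp
    have "0 \<le> \<epsilon> * mr * real N" using mr0 eps by simp
    then have "(\<epsilon> * mr * real N)^2 \<le> \<bar>AA s N x - mr * real N\<bar>^2"
      using h by (intro power_mono) auto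
    then show "x \<in> {x \<in> space gauss_measure. c \<le> (AA s N x - real N * mr)^2}"
      by (simp add: c_def mult.commute)
  qed
  then have "measure gauss_measure {x. \<epsilon> * mr * real N < \<bar>AA s N x - mr * real N\<bar>}
      \<le> measure gauss_measure {x \<in> space gauss_measure. c \<le> (AA s N x - real N * mr)^2}"
    by (intro gm.finite_measure_mono) auto
  also have "\<dots> \<le> (\<integral>x. (AA s N x - real N * mr)^2 \<partial>gauss_measure) / c"
  proof (rule integral_Markov_inequality_measure[OF _ _ _ c0])
    show "integrable gauss_measure (\<lambda>x. (AA s N x - real N * mr)^2)"
      by (rule gm.integrable_const_bound[where B="(real N + real N * mr)^2"])
         (use AA_sq_le mr0 in \<open>auto intro!: AE_I2\<close>)
  qed auto
  also have "\<dots> \<le> K * mr * (real N * (2 * (720 / 21))) / c"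
    using var_bound[OF pos, of N] c0 unfolding mr_def K_def by (intro divide_right_mono) auto
  also have "\<dots> = K * (2 * (720 / 21)) / (\<epsilon>^2 * mr * real N)"
    unfolding c_def using mr0 eps N by (simp add: power2_eq_square field_simps)
  finally show ?thesis .
qed



lemma gauss_range: "0 \<le> gauss y \<and> gauss y < 1"
  by (simp add: gauss_def frac_lt_1)

lemma funpow_range: "x \<in> {0..<1} \<Longrightarrow> (gauss ^^ n) x \<in> {0..<1}"
  by (induction n) (auto simp: gauss_range)

lemma irr_gauss: assumes "x \<notin> \<rat>" shows "gauss x \<notin> \<rat>"
proof
  assume g: "gauss x \<in> \<rat>"
  have "1 / x = gauss x + of_int \<lfloor>1 / x\<rfloor>" by (simp add: gauss_def frac_def)
  also have "\<dots> \<in> \<rat>" using g by (intro Rats_add) auto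
  finally have h: "1 / x \<in> \<rat>" .
  have "inverse (1 / x) \<in> \<rat>" by (rule Rats_inverse[OF h])
  then show False using assms by simp
qed

lemma irr_funpow: "x \<notin> \<rat> \<Longrightarrow> (gauss ^^ n) x \<notin> \<rat>"
  by (induction n) (auto simp: irr_gauss)

lemma irr_nz: "x \<notin> \<rat> \<Longrightarrow> (gauss ^^ n) x \<noteq> 0"
  using irr_funpow[of x n] by auto

lemma gauss_len_irr: "x \<notin> \<rat> \<Longrightarrow> gauss_len x = None"
  using irr_nz by (auto simp: gauss_len_def)

lemma cf_digit_irr: "x \<notin> \<rat> \<Longrightarrow> cf_digit x i = dg ((gauss ^^ (i - 1)) x)"
  by (simp add: cf_digit_def gauss_len_irr gauss_digit_def dg_def)

lemma cf_has_irr: "x \<notin> \<rat> \<Longrightarrow> cf_has_digits x m"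
  by (simp add: cf_has_digits_def gauss_len_irr)

lemma cyl_irr: "x \<notin> \<rat> \<Longrightarrow> x \<in> {0..<1} \<Longrightarrow> (x \<in> cylinder s) = (x \<in> D s)"
  by (simp add: cylinder_def D_def cf_digit_irr cf_has_irr)

lemma Acount_irr:
  assumes x: "x \<notin> \<rat>"
  shows "real (A_count s N x) = AA s N x"
proof -
  have P: "(\<forall>j<length s. cf_digit x (i + j) = s ! j) = ((gauss ^^ (i - 1)) x \<in> D s)" if "1 \<le> i" for i
  proof -
    have "cf_digit x (i + j) = dg ((gauss ^^ j) ((gauss ^^ (i - 1)) x))" for j
    proof -
      have "i + j - 1 = j + (i - 1)" using that by simp
      then show ?thesis by (simp add: cf_digit_irr[OF x] funpow_add)
    qed
    then show ?thesis by (simp add: D_def)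
  qed
  have e: "{i \<in> {1..N}. \<forall>j<length s. cf_digit x (i + j) = s ! j} = Suc ` {n \<in> {..<N}. (gauss ^^ n) x \<in> D s}"
  proof (rule set_eqI)
    fix i
    show "(i \<in> {i \<in> {1..N}. \<forall>j<length s. cf_digit x (i + j) = s ! j}) = (i \<in> Suc ` {n \<in> {..<N}. (gauss ^^ n) x \<in> D s})"
    proof (cases i)
      case 0 then show ?thesis by auto
    next
      case (Suc n) then show ?thesis using P[of i] by auto
    qed
  qed
  have "real (A_count s N x) = real (card {n \<in> {..<N}. (gauss ^^ n) x \<in> D s})"
    unfolding A_count_def e by (subst card_image) auto
  also have "\<dots> = (\<Sum>n<N. of_bool ((gauss ^^ n) x \<in> D s))"
  proof -
    have e: "{n\<in>{..<N}. (gauss ^^ n) x \<in> D s} = {..<N} \<inter> {n. (gauss ^^ n) x \<in> D s}" by auto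
    have "(\<Sum>n<N. of_bool ((gauss ^^ n) x \<in> D s) :: real) = of_nat (card ({..<N} \<inter> {n. (gauss ^^ n) x \<in> D s}))"
      by (rule sum_of_bool_eq) auto
    then show ?thesis unfolding e by simp
  qed
  also have "\<dots> = AA s N x" by (simp add: AA_def XX_def indicator_def)
  finally show ?thesis .
qed

lemma sing_borel: "{a::real} \<in> sets borel"
  by (rule borel_closed) (rule closed_singleton)

lemma Rats_borel[measurable]: "(\<rat> :: real set) \<in> sets borel"
  by (rule sets.countable[OF _ countable_rat]) (rule sing_borel)

lemma countable_borel: "countable (A :: real set) \<Longrightarrow> A \<in> sets borel"
  by (rule sets.countable) (auto intro: sing_borel)

lemma cylinder_meas: "cylinder s \<in> sets borel"
proof -
  have "cylinder s = (D s \<inter> {0..<1} \<inter> - \<rat>) \<union> (cylinder s \<inter> \<rat>)"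
  proof (rule set_eqI)
    fix x
    show "(x \<in> cylinder s) = (x \<in> (D s \<inter> {0..<1} \<inter> - \<rat>) \<union> (cylinder s \<inter> \<rat>))"
    proof (cases "x \<in> \<rat>")
      case True then show ?thesis by auto
    next
      case False
      show ?thesis
      proof (cases "x \<in> {0..<1}")
        case True then show ?thesis using cyl_irr[OF False True] False by auto
      next
        case F2: False then show ?thesis by (auto simp: cylinder_def)
      qed
    qed
  qed
  moreover have "cylinder s \<inter> \<rat> \<in> sets borel"
    by (rule countable_borel[OF countable_subset[OF _ countable_rat]]) auto
  moreover have "D s \<inter> {0..<1} \<inter> - \<rat> \<in> sets borel"
  proof -
    have "- \<rat> = UNIV - (\<rat> :: real set)" by auto
    then have "- \<rat> \<in> sets (borel :: real measure)" using sets.compl_sets[OF Rats_borel] by simp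
    then show ?thesis by measurable
  qed
  ultimately show ?thesis by (metis sets.Un)
qed

lemma AE_irr: "AE x in gauss_measure. x \<notin> \<rat>"
proof -
  have "AE x in lborel. x \<notin> \<rat>"
    using countable_imp_null_set_lborel[OF countable_rat] by (rule AE_not_in)
  then show ?thesis unfolding gauss_measure_alt by (subst AE_density) (auto elim: AE_mp)
qed

lemma gmu_cyl: "gmu (cylinder s) = measure gauss_measure (D s)"
proof (rule measure_eq_AE)
  show "AE x in gauss_measure. (x \<in> cylinder s) = (x \<in> D s)"
    using AE_irr AE_gm by eventually_elim (simp add: cyl_irr)
qed (auto simp: cylinder_meas)



lemma gauss_len_Some: "gauss_len x = Some n \<Longrightarrow> (gauss ^^ n) x = 0 \<and> (\<forall>m<n. (gauss ^^ m) x \<noteq> 0)"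
proof -
  assume h: "gauss_len x = Some n"
  then have ex: "\<exists>n. (gauss ^^ n) x = 0" and nd: "n = (LEAST n. (gauss ^^ n) x = 0)"
    by (auto simp: gauss_len_def split: if_splits)
  have "(gauss ^^ n) x = 0" using LeastI_ex[OF ex] nd by simp
  moreover have "\<forall>m<n. (gauss ^^ m) x \<noteq> 0"
  proof (intro allI impI)
    fix m assume "m < n"
    then show "(gauss ^^ m) x \<noteq> 0" using not_less_Least[of m "\<lambda>n. (gauss ^^ n) x = 0"] nd by simp
  qed
  ultimately show ?thesis by blast
qed

lemma gauss_len_None: "gauss_len x = None \<Longrightarrow> (gauss ^^ m) x \<noteq> 0"
  by (auto simp: gauss_len_def split: if_splits)

lemma floor_pos: assumes "y \<in> {0..<1}" "y \<noteq> 0" shows "1 \<le> \<lfloor>1 / y\<rfloor>"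
proof -
  have "0 < y" "y < 1" using assms by auto
  then have "1 < 1 / y" by (simp add: field_simps)
  then show ?thesis by (simp add: le_floor_iff)
qed

lemma last_digit: assumes "y \<in> {0..<1}" "y \<noteq> 0" "gauss y = 0" shows "2 \<le> \<lfloor>1 / y\<rfloor>"
proof -
  have y: "0 < y" "y < 1" using assms by auto
  then have g1: "1 < 1 / y" by (simp add: field_simps)
  have "1 / y \<in> \<int>" using assms(3) by (simp add: gauss_def frac_eq_0_iff)
  then obtain m where m: "1 / y = of_int m" by (auto elim: Ints_cases)
  then have "1 < m" using g1 by simp
  then show ?thesis using m by simp
qed

lemma cf_digit_pos:
  assumes x: "x \<in> {0..<1}" and h: "cf_has_digits x M" and i: "1 \<le> i" "i \<le> M"
  shows "0 < cf_digit x i"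
proof (cases "gauss_len x")
  case None
  have r: "(gauss ^^ (i - 1)) x \<in> {0..<1}" by (rule funpow_range[OF x])
  show ?thesis using floor_pos[OF r gauss_len_None[OF None]]
    by (simp add: cf_digit_def None gauss_digit_def)
next
  case (Some n)
  have n: "(gauss ^^ n) x = 0" "\<And>m. m < n \<Longrightarrow> (gauss ^^ m) x \<noteq> 0" using gauss_len_Some[OF Some] by auto
  have "M \<le> (if n = 0 then 0 else n + 1)" using h by (simp add: cf_has_digits_def Some)
  then have n0: "n \<noteq> 0" and iM: "i \<le> n + 1" using i by (auto split: if_splits)
  have r: "(gauss ^^ (i - 1)) x \<in> {0..<1}" by (rule funpow_range[OF x])
  consider "i < n" | "i = n" | "i = n + 1" using iM by linarith
  then show ?thesis
  proof cases
    case 1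
    then have "(gauss ^^ (i - 1)) x \<noteq> 0" using n(2) by simp
    then show ?thesis using floor_pos[OF r] 1 by (simp add: cf_digit_def Some gauss_digit_def)
  next
    case 2
    have nz: "(gauss ^^ (n - 1)) x \<noteq> 0" using n(2) n0 by simp
    obtain n' where n': "n = Suc n'" using n0 by (cases n) auto
    have "gauss ((gauss ^^ (n - 1)) x) = 0" using n(1) unfolding n' by simp
    then have "2 \<le> \<lfloor>1 / (gauss ^^ (n - 1)) x\<rfloor>" using last_digit[OF _ nz] funpow_range[OF x] by blast
    then show ?thesis using 2 by (simp add: cf_digit_def Some gauss_digit_def)
  next
    case 3 then show ?thesis using n0 by (simp add: cf_digit_def Some)
  qed
qed



lemma measure_part:
  assumes pos: "\<forall>d\<in>set s. 0 < d" and eps: "0 < \<epsilon>" and N: "1 \<le> N"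
  shows "gmu (E_set \<epsilon> s N) \<le> (8 / (699 / 720 :: real)^(length s) * (2 * (720 / 21))) / (\<epsilon>^2 * gmu (cylinder s) * real N)"
proof -
  define mr where "mr = measure gauss_measure (D s)"
  have cy: "gmu (cylinder s) = mr" unfolding mr_def by (rule gmu_cyl)
  define Ed where "Ed = {x. \<epsilon> * mr * real N < \<bar>AA s N x - mr * real N\<bar>}"
  have Edm: "Ed \<in> sets gauss_measure" unfolding Ed_def by simp
  have "gmu (E_set \<epsilon> s N) \<le> gmu Ed"
  proof (rule gm.finite_measure_mono_AE[OF _ Edm])
    show "AE x in gauss_measure. x \<in> E_set \<epsilon> s N \<longrightarrow> x \<in> Ed"
      using AE_irr
    proof eventually_elim
      fix x :: real assume x: "x \<notin> \<rat>"
      show "x \<in> E_set \<epsilon> s N \<longrightarrow> x \<in> Ed"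
        using Acount_irr[OF x, of s N] by (auto simp: E_set_def Ed_def cy)
    qed
  qed
  also have "\<dots> \<le> 8 / (699 / 720 :: real)^(length s) * (2 * (720 / 21)) / (\<epsilon>^2 * mr * real N)"
    unfolding Ed_def mr_def by (rule cheb_dyn[OF pos eps N])
  finally show ?thesis unfolding cy .
qed

lemma union_part:
  assumes k: "1 \<le> length s"
  shows "\<exists>T. T \<subseteq> {t. length t = N + length s - 1 \<and> (\<forall>d \<in> set t. d > 0)}
                  \<and> E_set \<epsilon> s N = (\<Union>t\<in>T. cylinder t)"
proof -
  let ?M = "N + length s - 1"
  define dig where "dig x = map (\<lambda>i. cf_digit x (i + 1)) [0..<?M]" for x
  define T where "T = {t. length t = ?M \<and> (\<forall>d \<in> set t. d > 0) \<and> (\<exists>x\<in>E_set \<epsilon> s N. t = dig x)}"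
  have "E_set \<epsilon> s N = (\<Union>t\<in>T. cylinder t)"
  proof
    show "E_set \<epsilon> s N \<subseteq> (\<Union>t\<in>T. cylinder t)"
    proof
      fix x assume xE: "x \<in> E_set \<epsilon> s N"
      then have x01: "x \<in> {0..<1}" and hd: "cf_has_digits x ?M" by (auto simp: E_set_def)
      have "dig x \<in> T"
      proof -
        have "\<forall>d \<in> set (dig x). d > 0"
        proof
          fix d assume "d \<in> set (dig x)"
          then obtain i where "i < ?M" "d = cf_digit x (i + 1)" by (auto simp: dig_def)
          then show "d > 0" using cf_digit_pos[OF x01 hd, of "i + 1"] by simp
        qed
        then show ?thesis using xE by (auto simp: T_def dig_def)
      qed
      moreover have "x \<in> cylinder (dig x)"
        using x01 hd by (auto simp: cylinder_def dig_def)
      ultimately show "x \<in> (\<Union>t\<in>T. cylinder t)" by blast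
    qed
  next
    show "(\<Union>t\<in>T. cylinder t) \<subseteq> E_set \<epsilon> s N"
    proof
      fix y assume "y \<in> (\<Union>t\<in>T. cylinder t)"
      then obtain x where xE: "x \<in> E_set \<epsilon> s N" and yc: "y \<in> cylinder (dig x)"
        by (auto simp: T_def)
      have y01: "y \<in> {0..<1}" and hy: "cf_has_digits y ?M"
        and dy: "\<And>i. i < ?M \<Longrightarrow> cf_digit y (i + 1) = cf_digit x (i + 1)"
        using yc by (auto simp: cylinder_def dig_def)
      have "A_count s N y = A_count s N x"
      proof -
        have "{i \<in> {1..N}. \<forall>j<length s. cf_digit y (i + j) = s ! j} = {i \<in> {1..N}. \<forall>j<length s. cf_digit x (i + j) = s ! j}"
        proof -
          have eqd: "cf_digit y (i + j) = cf_digit x (i + j)" if i: "i \<in> {1..N}" and j: "j < length s" for i j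
          proof -
            have "i + j - 1 < ?M" using i j k by auto
            then have "cf_digit y (i + j - 1 + 1) = cf_digit x (i + j - 1 + 1)" by (rule dy)
            moreover have "i + j - 1 + 1 = i + j" using i by auto
            ultimately show ?thesis by simp
          qed
          have "(\<forall>j<length s. cf_digit y (i + j) = s ! j) = (\<forall>j<length s. cf_digit x (i + j) = s ! j)"
            if "i \<in> {1..N}" for i using eqd[OF that] by simp
          then show ?thesis by blast
        qed
        then show ?thesis by (simp add: A_count_def)
      qed
      then show "y \<in> E_set \<epsilon> s N" using xE y01 hy by (simp add: E_set_def)
    qed
  qed
  moreover have "T \<subseteq> {t. length t = ?M \<and> (\<forall>d \<in> set t. d > 0)}" by (auto simp: T_def)
  ultimately show ?thesis by blast
qed

theorem proposition2p3:
  fixes k :: nat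
  assumes "k \<ge> 1"
  shows "\<exists>C::real. \<forall>(s::nat list) (\<epsilon>::real) (N::nat).
           length s = k \<longrightarrow> (\<forall>d \<in> set s. d > 0) \<longrightarrow> \<epsilon> > 0 \<longrightarrow> N \<ge> 1 \<longrightarrow>
             gmu (E_set \<epsilon> s N) \<le> C / (\<epsilon>^2 * gmu (cylinder s) * N)
           \<and> (\<exists>T. T \<subseteq> {t. length t = N + k - 1 \<and> (\<forall>d \<in> set t. d > 0)}
                  \<and> E_set \<epsilon> s N = (\<Union>t\<in>T. cylinder t))"
proof (rule exI[where x="8 / (699 / 720 :: real)^k * (2 * (720 / 21))"], intro allI impI conjI)
  fix s :: "nat list" and \<epsilon> :: real and N :: nat
  assume len: "length s = k" and pos: "\<forall>d \<in> set s. d > 0" and eps: "\<epsilon> > 0" and N: "N \<ge> 1"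
  show "gmu (E_set \<epsilon> s N) \<le> (8 / (699 / 720 :: real)^k * (2 * (720 / 21))) / (\<epsilon>^2 * gmu (cylinder s) * N)"
    using measure_part[OF pos eps N] len by simp
  show "\<exists>T. T \<subseteq> {t. length t = N + k - 1 \<and> (\<forall>d \<in> set t. d > 0)} \<and> E_set \<epsilon> s N = (\<Union>t\<in>T. cylinder t)"
    using union_part[of s N \<epsilon>] len assms by simp
qed


end
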